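(* Let $\mathcal{R}$ be a cyclic proof system with finitely many sequents and finitely many rules, induced by a trace interpretation $\iota\colon\mathcal{R}\to\mathcal{T}_\mathcal{A}$ for an activation algebra $\mathcal{A}$. Then the map $\mathit{expand}\colon\mathrm{S}(\mathcal{R})\to\mathrm{R}(\mathcal{R})$, which is the identity on sequents $\Gamma;(\Theta,\sigma)$ and sends each rule $R(\Theta,\sigma)$ of $\mathrm{S}(\mathcal{R})$ to the $\mathrm{R}(\mathcal{R})$-preproof described below, is a proof morphism: for every $\mathrm{S}(\mathcal{R})$-proof $\Pi$, $\mathit{expand}(\Pi)$ is an $\mathrm{R}(\mathcal{R})$-proof.
   Context: An activation algebra $\mathcal{A}=(A,\le,\vee,0,\alpha)$ is a finite join-semilattice with least element $0$ and distinguished $\alpha\neq0$; $\mathcal{T}_\mathcal{A}$ has finite sets as objects and relations $R\subseteq X\times A\times Y$ as morphisms $X\to Y$. A trace interpretation $\iota\colon\mathcal{R}\to\mathcal{T}_\mathcal{A}$ of a derivation system (sequents $\textsc{Seq}$, rules with conclusion $\Gamma$ and premises $\Delta_1,\dots,\Delta_n$) assigns each sequent an object $\iota(\Gamma)$ and each rule morphisms $r_i\colon\iota(\Gamma)\to\iota(\Delta_i)$. Cyclic trees and preproofs: a cyclic tree is a finite tree $T\subseteq\omega^*$ (prefix-closed) with a partial map $\beta$ from leaves (buds) to inner nodes (companions), $\beta(t)$ a strict prefix of $t$; a preproof labels nodes with sequents (bud and companion equal), and each non-bud non-open node with a rule whose conclusion is its label and premises are its children's labels. A preproof morphism $f$ maps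 sequents to sequents and rules to preproofs with matching endsequent and open leaves, translating preproofs by substitution; it is a proof morphism if it maps proofs to proofs. Safra boards: with a fixed countable chip set $\mathcal{C}\supseteq\omega$, a Safra board on finite $X$ is $(\Theta,\sigma)$, $\Theta\subseteq\mathcal{C}$ finite with a linear order (control), $\sigma\colon X\times A\to\mathcal{P}(\mathcal{P}(\Theta))$ with every chip in some stack; $\gamma$ is covered iff it is the maximum of no stack; stacks are ordered by $S<_\Theta S'$ iff $S$ contains the least element of $S\triangle S'$. Transitions: $r$-successor for $r\colon X\to Y$ (set $\sigma^*(y,a)=\{S\in\sigma(x,b)\mid(x,c,y)\in r,\ a=b\vee c\}$; for every $y$ with $\sigma^*(y,\alpha)\ne\emptyset$ add one fresh chip $\iota(y)\notin\Theta$ (distinct for distinct $y$, placed above all old chips) to every stack of $\sigma^*(y,\alpha)$ and move these stacks to $(y,0)$, leaving $(y,\alpha)$ empty); weakening (remove stacks); thinning (keep only the $<_\Theta$-least stack at each position); population (add the empty stack at some positions $(x,0)$); $\gamma$-reset for covered $\gamma$ (replace each stack $S\ni\gamma$ by $\{z\in S\mid z\le\gamma\}$). The new control always consists of the chips still occurring (old ones in inherited order). A greedy $r$-transition from $(\Theta,\sigma)$: with $\gamma_1<\dots<\gamma_k$ all covered chips, do resets $R_{\gamma_k},\dots,R_{\gamma_1}$; then populate exactly the positions $(x,0)$ with no stack by $\{\emptyset\}$; then an $r$-successor; then the thinning. For $K$ at least the size of the sets involved, a board is $K$-sparse if $\Theta\subseteq\{n\in\omega\mid n<K(|A|+1)\}$,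 $|\Theta|\le K|A|$, at most one stack per position and no stack at any $(x,\alpha)$. For $K$-sparse $(\Theta,\sigma)$ on $X$ and $r\colon X\to Y$ a greedy $r$-transition to a $K$-sparse board $(\Theta',\sigma')$ exists such that $\Theta'\cap\Theta$ equals the intersection of all intermediate controls; fix one such and write $g_r(\Theta,\sigma)$ for its result. Reset proof system $\mathrm{R}(\mathcal{R})$: sequents $\Gamma;(\Theta,\sigma)$ with $(\Theta,\sigma)$ a board on $\iota(\Gamma)$; structural rules Weak, $\textsc{Reset}_\gamma$, Pop (single premise obtained by a weakening, $\gamma$-reset, resp. population of the conclusion's board), and for each $\mathcal{R}$-rule $R$ and board $(\Theta,\sigma)$ on $\iota(\Gamma)$ a rule with conclusion $\Gamma;(\Theta,\sigma)$ and premises $\Delta_i;(\Theta_i,\sigma_i)$, $(\Theta_i,\sigma_i)$ an $r_i$-successor. For a bud $t$, let $\Theta$ be the longest common prefix of the controls on the path from $\beta(t)$ to $t$; an invariant is a nonempty prefix $\theta$ of $\Theta$ with $\textsc{Reset}_{\max(\theta)}$ applied on that path; an assumption-free preproof is a proof iff every bud's path has an invariant. Proof search system $\mathrm{S}(\mathcal{R})$: let $K=\max\{|\iota(\Gamma)|\mid\Gamma\in\textsc{Seq}\}$. Sequents are $\Gamma;(\Theta,\sigma)$ with $(\Theta,\sigma)$ a $K$-sparse board on $\iota(\Gamma)$. For each $\mathcal{R}$-rule $R$ (conclusion $\Gamma$, premises $\Delta_i$, maps $r_i$) and each $K$-sparse $(\Theta,\sigma)$ on $\iota(\Gamma)$ there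 is a rule $R(\Theta,\sigma)$ with conclusion $\Gamma;(\Theta,\sigma)$ and premises $\Delta_i;g_{r_i}(\Theta,\sigma)$. An assumption-free $\mathrm{S}(\mathcal{R})$-preproof is a proof iff along every infinite path $(\Gamma_i;(\Theta_i,\sigma_i))_i$ there are $N$ and $\gamma\in\bigcap_{i\ge N}\Theta_i$ that is covered in infinitely many $(\Theta_i,\sigma_i)$. Translation of $R(\Theta,\sigma)$ by $\mathit{expand}$: the greedy $r_i$-transitions share their reset steps $R_{\gamma_k},\dots,R_{\gamma_1}$ and population step, yielding a board $(\Theta_p,\sigma_p)$, followed by $r_i$-successors $(\Theta_i^*,\sigma_i^* )$ and thinnings to $(\Theta_i,\sigma_i)$. $\mathit{expand}(R(\Theta,\sigma))$ is the $\mathrm{R}(\mathcal{R})$-preproof: $\textsc{Reset}_{\gamma_k},\dots,\textsc{Reset}_{\gamma_1}$ steps on $\Gamma$, then Pop to $\Gamma;(\Theta_p,\sigma_p)$, then the annotated rule $R$ with premises $\Delta_i;(\Theta_i^*,\sigma_i^* )$, each followed by Weak to the open leaf $\Delta_i;(\Theta_i,\sigma_i)$. *)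

theory Defs
  imports Main "HOL-Library.Sublist"
begin

text \<open>Chips are natural numbers (chip set C = omega). A control is a duplicate-free
list of chips (list order = the linear order on chips). sigma x a is the set of stacks
at position (x,a).\<close>

type_synonym ('x,'a) board = "nat list \<times> ('x \<Rightarrow> 'a \<Rightarrow> nat set set)"

definition chips :: "('x \<Rightarrow> 'a \<Rightarrow> nat set set) \<Rightarrow> nat set" where
  "chips \<sigma> = \<Union>{S. \<exists>x a. S \<in> \<sigma> x a}"

definition chip_le :: "nat list \<Rightarrow> nat \<Rightarrow> nat \<Rightarrow> bool" where
  "chip_le \<Theta> z w \<longleftrightarrow> (\<exists>i j. i \<le> j \<and> j < length \<Theta> \<and> \<Theta> ! i = z \<and> \<Theta> ! j = w)"

definition board_on :: "'x set \<Rightarrow> ('x,'a) board \<Rightarrow> bool" where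
  "board_on X B \<longleftrightarrow> finite X \<and> distinct (fst B)
     \<and> (\<forall>x a. x \<notin> X \<longrightarrow> snd B x a = {})
     \<and> (\<forall>x a S. S \<in> snd B x a \<longrightarrow> S \<subseteq> set (fst B))
     \<and> set (fst B) \<subseteq> chips (snd B)"

definition is_max_of :: "nat list \<Rightarrow> nat \<Rightarrow> nat set \<Rightarrow> bool" where
  "is_max_of \<Theta> \<gamma> S \<longleftrightarrow> \<gamma> \<in> S \<and> (\<forall>z\<in>S. chip_le \<Theta> z \<gamma>)"

definition covered :: "('x,'a) board \<Rightarrow> nat \<Rightarrow> bool" where
  "covered B \<gamma> \<longleftrightarrow> \<gamma> \<in> set (fst B) \<and> \<not> (\<exists>x a S. S \<in> snd B x a \<and> is_max_of (fst B) \<gamma> S)"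

definition stack_less :: "nat list \<Rightarrow> nat set \<Rightarrow> nat set \<Rightarrow> bool" where
  "stack_less \<Theta> S S' \<longleftrightarrow> (\<exists>z \<in> S - S'. \<forall>w \<in> (S - S') \<union> (S' - S). chip_le \<Theta> z w)"

definition restrict_ctrl :: "nat list \<Rightarrow> ('x \<Rightarrow> 'a \<Rightarrow> nat set set) \<Rightarrow> nat list" where
  "restrict_ctrl \<Theta> \<sigma> = filter (\<lambda>z. z \<in> chips \<sigma>) \<Theta>"

text \<open>r-successor (relation, since the fresh chips and their mutual order are chosen).\<close>
definition successor :: "'a::{semilattice_sup,order_bot} \<Rightarrow> ('x \<times> 'a \<times> 'x) set
     \<Rightarrow> ('x,'a) board \<Rightarrow> ('x,'a) board \<Rightarrow> bool" where
  "successor \<alpha> r B B' \<longleftrightarrow>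
     (let \<Theta> = fst B; \<sigma> = snd B;
          \<sigma>s = (\<lambda>y a. {S. \<exists>x b c. S \<in> \<sigma> x b \<and> (x, c, y) \<in> r \<and> a = sup b c});
          Ya = {y. \<sigma>s y \<alpha> \<noteq> {}}
      in \<exists>fr ns. inj_on fr Ya \<and> fr ` Ya \<inter> set \<Theta> = {}
           \<and> snd B' = (\<lambda>y a. if a = \<alpha> then {}
                              else if a = bot then \<sigma>s y bot \<union> (insert (fr y)) ` \<sigma>s y \<alpha>
                              else \<sigma>s y a)
           \<and> distinct ns \<and> set ns = fr ` Ya
           \<and> fst B' = restrict_ctrl \<Theta> (snd B') @ ns)"

definition weakening :: "('x,'a) board \<Rightarrow> ('x,'a) board \<Rightarrow> bool" where
  "weakening B B' \<longleftrightarrow> (\<forall>x a. snd B' x a \<subseteq> snd B x a) \<and> fst B' = restrict_ctrl (fst B) (snd B')"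

definition reset_board :: "nat \<Rightarrow> ('x,'a) board \<Rightarrow> ('x,'a) board" where
  "reset_board \<gamma> B =
     (let \<sigma>' = (\<lambda>x a. (\<lambda>S. if \<gamma> \<in> S then {z\<in>S. chip_le (fst B) z \<gamma>} else S) ` snd B x a)
      in (restrict_ctrl (fst B) \<sigma>', \<sigma>'))"

definition pop_board :: "'x set \<Rightarrow> ('x,'a::bot) board \<Rightarrow> ('x,'a) board" where
  "pop_board P B = (fst B, \<lambda>x a. if a = bot \<and> x \<in> P then insert {} (snd B x a) else snd B x a)"

definition thin_board :: "('x,'a) board \<Rightarrow> ('x,'a) board" where
  "thin_board B =
     (let \<sigma>' = (\<lambda>x a. {S \<in> snd B x a. \<forall>S' \<in> snd B x a. S' \<noteq> S \<longrightarrow> stack_less (fst B) S S'})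
      in (restrict_ctrl (fst B) \<sigma>', \<sigma>'))"

text \<open>Covered chips in increasing order; resets are applied from the largest down.\<close>
definition cov_list :: "('x,'a) board \<Rightarrow> nat list" where
  "cov_list B = filter (covered B) (fst B)"

definition reset_stage :: "('x,'a) board \<Rightarrow> nat \<Rightarrow> ('x,'a) board" where
  "reset_stage B j = fold reset_board (take j (rev (cov_list B))) B"

definition greedy_pre :: "'x set \<Rightarrow> ('x,'a::bot) board \<Rightarrow> ('x,'a) board" where
  "greedy_pre X B = (let B' = reset_stage B (length (cov_list B))
                     in pop_board {x \<in> X. snd B' x bot = {}} B')"

definition sparse :: "'a \<Rightarrow> nat \<Rightarrow> 'x set \<Rightarrow> ('x,'a::finite) board \<Rightarrow> bool" where
  "sparse \<alpha> K X B \<longleftrightarrow> board_on X B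
     \<and> set (fst B) \<subseteq> {n. n < K * (card (UNIV :: 'a set) + 1)}
     \<and> length (fst B) \<le> K * card (UNIV :: 'a set)
     \<and> (\<forall>x a. card (snd B x a) \<le> 1)
     \<and> (\<forall>x. snd B x \<alpha> = {})"

definition Kmax :: "('s::finite \<Rightarrow> 'x set) \<Rightarrow> nat" where
  "Kmax \<iota> = Max (range (\<lambda>\<Gamma>. card (\<iota> \<Gamma>)))"

text \<open>The fixed choice of greedy transitions g_r: gs X Y r B is the r-successor board
chosen in the greedy transition from B; g_r B = thin_board (gs X Y r B).\<close>
definition greedy_choice_ok :: "'a::{finite,semilattice_sup,order_bot} \<Rightarrow> nat \<Rightarrow> ('s \<Rightarrow> 'x set)
     \<Rightarrow> ('r \<Rightarrow> 's) \<Rightarrow> ('r \<Rightarrow> 's list) \<Rightarrow> ('r \<Rightarrow> nat \<Rightarrow> ('x \<times> 'a \<times> 'x) set)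
     \<Rightarrow> ('x set \<Rightarrow> 'x set \<Rightarrow> ('x \<times> 'a \<times> 'x) set \<Rightarrow> ('x,'a) board \<Rightarrow> ('x,'a) board) \<Rightarrow> bool" where
  "greedy_choice_ok \<alpha> K \<iota> cncl prms tr gs \<longleftrightarrow>
    (\<forall>R i B. i < length (prms R) \<longrightarrow> sparse \<alpha> K (\<iota> (cncl R)) B \<longrightarrow>
      (let X = \<iota> (cncl R); Y = \<iota> (prms R ! i); r = tr R i;
           k = length (cov_list B); Bp = greedy_pre X B; Bs = gs X Y r B; B' = thin_board Bs
       in successor \<alpha> r Bp Bs \<and> sparse \<alpha> K Y B'
          \<and> set (fst B') \<inter> set (fst B)
              = \<Inter> ((\<lambda>C. set (fst C)) ` ({reset_stage B j | j. j \<le> k} \<union> {Bp, Bs, B'}))))"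

record ('q,'k) preproof =
  nodes :: "nat list set"
  bud :: "nat list \<Rightarrow> nat list option"
  lbl :: "nat list \<Rightarrow> 'q"
  rul :: "nat list \<Rightarrow> 'k option"

definition is_preproof :: "('q \<Rightarrow> bool) \<Rightarrow> ('q \<Rightarrow> 'k \<Rightarrow> 'q list \<Rightarrow> bool) \<Rightarrow> ('q,'k) preproof \<Rightarrow> bool" where
  "is_preproof sq ok P \<longleftrightarrow> finite (nodes P) \<and> [] \<in> nodes P
    \<and> (\<forall>t\<in>nodes P. \<forall>s. prefix s t \<longrightarrow> s \<in> nodes P)
    \<and> (\<forall>t\<in>nodes P. sq (lbl P t))
    \<and> (\<forall>t\<in>nodes P. case rul P t of
          None \<Rightarrow> (\<forall>j. t @ [j] \<notin> nodes P)
        | Some k \<Rightarrow> (\<exists>n. (\<forall>j. t @ [j] \<in> nodes P \<longleftrightarrow> j < n)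
                        \<and> ok (lbl P t) k (map (\<lambda>j. lbl P (t @ [j])) [0..<n])))
    \<and> (\<forall>t c. bud P t = Some c \<longrightarrow> t \<in> nodes P \<and> rul P t = None \<and> strict_prefix c t
              \<and> (\<exists>j. c @ [j] \<in> nodes P) \<and> lbl P c = lbl P t)"

definition assumption_free :: "('q,'k) preproof \<Rightarrow> bool" where
  "assumption_free P \<longleftrightarrow> (\<forall>t\<in>nodes P. rul P t = None \<longrightarrow> bud P t \<noteq> None)"

definition inf_path :: "('q,'k) preproof \<Rightarrow> (nat \<Rightarrow> nat list) \<Rightarrow> bool" where
  "inf_path P p \<longleftrightarrow> p 0 = [] \<and>
     (\<forall>i. p i \<in> nodes P \<and> ((\<exists>j. p (Suc i) = p i @ [j]) \<or> bud P (p i) = Some (p (Suc i))))"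

definition S_seq :: "'a::finite \<Rightarrow> nat \<Rightarrow> ('s \<Rightarrow> 'x set) \<Rightarrow> 's \<times> ('x,'a) board \<Rightarrow> bool" where
  "S_seq \<alpha> K \<iota> q = sparse \<alpha> K (\<iota> (fst q)) (snd q)"

definition S_ok :: "'a::finite \<Rightarrow> nat \<Rightarrow> ('s \<Rightarrow> 'x set) \<Rightarrow> ('r \<Rightarrow> 's) \<Rightarrow> ('r \<Rightarrow> 's list)
     \<Rightarrow> ('r \<Rightarrow> nat \<Rightarrow> ('x \<times> 'a \<times> 'x) set)
     \<Rightarrow> ('x set \<Rightarrow> 'x set \<Rightarrow> ('x \<times> 'a \<times> 'x) set \<Rightarrow> ('x,'a) board \<Rightarrow> ('x,'a) board)
     \<Rightarrow> 's \<times> ('x,'a) board \<Rightarrow> 'r \<times> ('x,'a) board \<Rightarrow> ('s \<times> ('x,'a) board) list \<Rightarrow> bool" where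
  "S_ok \<alpha> K \<iota> cncl prms tr gs q k ps \<longleftrightarrow>
     fst q = cncl (fst k) \<and> snd q = snd k \<and> sparse \<alpha> K (\<iota> (fst q)) (snd k)
     \<and> ps = map (\<lambda>i. (prms (fst k) ! i,
                       thin_board (gs (\<iota> (cncl (fst k))) (\<iota> (prms (fst k) ! i)) (tr (fst k) i) (snd k))))
               [0..<length (prms (fst k))]"

definition S_proof :: "'a::finite \<Rightarrow> nat \<Rightarrow> ('s \<Rightarrow> 'x set) \<Rightarrow> ('r \<Rightarrow> 's) \<Rightarrow> ('r \<Rightarrow> 's list)
     \<Rightarrow> ('r \<Rightarrow> nat \<Rightarrow> ('x \<times> 'a \<times> 'x) set)
     \<Rightarrow> ('x set \<Rightarrow> 'x set \<Rightarrow> ('x \<times> 'a \<times> 'x) set \<Rightarrow> ('x,'a) board \<Rightarrow> ('x,'a) board)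
     \<Rightarrow> ('s \<times> ('x,'a) board, 'r \<times> ('x,'a) board) preproof \<Rightarrow> bool" where
  "S_proof \<alpha> K \<iota> cncl prms tr gs P \<longleftrightarrow>
     is_preproof (S_seq \<alpha> K \<iota>) (S_ok \<alpha> K \<iota> cncl prms tr gs) P \<and> assumption_free P
     \<and> (\<forall>p. inf_path P p \<longrightarrow>
          (\<exists>N \<gamma>. (\<forall>i\<ge>N. \<gamma> \<in> set (fst (snd (lbl P (p i)))))
                 \<and> infinite {i. covered (snd (lbl P (p i))) \<gamma>}))"

datatype 'r rkind = RWeak | RReset nat | RPop | RRule 'r

definition R_seq :: "('s \<Rightarrow> 'x set) \<Rightarrow> 's \<times> ('x,'a) board \<Rightarrow> bool" where
  "R_seq \<iota> q = board_on (\<iota> (fst q)) (snd q)"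

definition R_ok :: "'a::{semilattice_sup,order_bot} \<Rightarrow> ('s \<Rightarrow> 'x set) \<Rightarrow> ('r \<Rightarrow> 's) \<Rightarrow> ('r \<Rightarrow> 's list)
     \<Rightarrow> ('r \<Rightarrow> nat \<Rightarrow> ('x \<times> 'a \<times> 'x) set)
     \<Rightarrow> 's \<times> ('x,'a) board \<Rightarrow> 'r rkind \<Rightarrow> ('s \<times> ('x,'a) board) list \<Rightarrow> bool" where
  "R_ok \<alpha> \<iota> cncl prms tr q k ps \<longleftrightarrow> (case k of
      RWeak \<Rightarrow> (\<exists>B'. ps = [(fst q, B')] \<and> weakening (snd q) B')
    | RReset \<gamma> \<Rightarrow> covered (snd q) \<gamma> \<and> ps = [(fst q, reset_board \<gamma> (snd q))]
    | RPop \<Rightarrow> (\<exists>P. P \<subseteq> \<iota> (fst q) \<and> ps = [(fst q, pop_board P (snd q))])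
    | RRule R \<Rightarrow> fst q = cncl R \<and> length ps = length (prms R)
        \<and> (\<forall>i<length ps. fst (ps ! i) = prms R ! i \<and> successor \<alpha> (tr R i) (snd q) (snd (ps ! i))))"

text \<open>Invariant condition: theta a nonempty prefix of the longest common prefix of the
controls on the path from the companion to the bud (equivalently: a common prefix of all
those controls), with Reset_{max theta} applied on that path.\<close>
definition R_proof :: "'a::{semilattice_sup,order_bot} \<Rightarrow> ('s \<Rightarrow> 'x set) \<Rightarrow> ('r \<Rightarrow> 's) \<Rightarrow> ('r \<Rightarrow> 's list)
     \<Rightarrow> ('r \<Rightarrow> nat \<Rightarrow> ('x \<times> 'a \<times> 'x) set)
     \<Rightarrow> ('s \<times> ('x,'a) board, 'r rkind) preproof \<Rightarrow> bool" where
  "R_proof \<alpha> \<iota> cncl prms tr P \<longleftrightarrow>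
     is_preproof (R_seq \<iota>) (R_ok \<alpha> \<iota> cncl prms tr) P \<and> assumption_free P
     \<and> (\<forall>t c. bud P t = Some c \<longrightarrow>
          (\<exists>\<theta>. \<theta> \<noteq> [] \<and> (\<forall>s. prefix c s \<and> prefix s t \<longrightarrow> prefix \<theta> (fst (snd (lbl P s))))
               \<and> (\<exists>s. prefix c s \<and> prefix s t \<and> rul P s = Some (RReset (last \<theta>)))))"

fun phi_aux :: "(nat list \<Rightarrow> nat) \<Rightarrow> nat list \<Rightarrow> nat list \<Rightarrow> nat list" where
  "phi_aux c p [] = []"
| "phi_aux c p (i # rest) = replicate (Suc (c p)) 0 @ [i, 0] @ phi_aux c (p @ [i]) rest"

definition cov_count :: "('q, 'r \<times> ('x,'a) board) preproof \<Rightarrow> nat list \<Rightarrow> nat" where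
  "cov_count P t = (case rul P t of Some k \<Rightarrow> length (cov_list (snd k)) | None \<Rightarrow> 0)"

text \<open>Address in expand(P) of the node corresponding to node t of P.\<close>
definition phi :: "('q, 'r \<times> ('x,'a) board) preproof \<Rightarrow> nat list \<Rightarrow> nat list" where
  "phi P t = phi_aux (cov_count P) [] t"

definition exp_entries :: "('s \<Rightarrow> 'x set) \<Rightarrow> ('r \<Rightarrow> 's) \<Rightarrow> ('r \<Rightarrow> 's list)
     \<Rightarrow> ('r \<Rightarrow> nat \<Rightarrow> ('x \<times> 'a \<times> 'x) set)
     \<Rightarrow> ('x set \<Rightarrow> 'x set \<Rightarrow> ('x \<times> 'a \<times> 'x) set \<Rightarrow> ('x,'a::bot) board \<Rightarrow> ('x,'a) board)
     \<Rightarrow> ('s \<times> ('x,'a) board, 'r \<times> ('x,'a) board) preproof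
     \<Rightarrow> (nat list \<times> ('s \<times> ('x,'a) board) \<times> 'r rkind option) set" where
  "exp_entries \<iota> cncl prms tr gs P =
     {(phi P t, lbl P t, None) | t. t \<in> nodes P \<and> rul P t = None}
   \<union> {(phi P t @ replicate j 0, (cncl R, reset_stage B j), Some (RReset (rev (cov_list B) ! j)))
       | t R B j. t \<in> nodes P \<and> rul P t = Some (R, B) \<and> j < length (cov_list B)}
   \<union> {(phi P t @ replicate (length (cov_list B)) 0,
        (cncl R, reset_stage B (length (cov_list B))), Some RPop)
       | t R B. t \<in> nodes P \<and> rul P t = Some (R, B)}
   \<union> {(phi P t @ replicate (Suc (length (cov_list B))) 0,
        (cncl R, greedy_pre (\<iota> (cncl R)) B), Some (RRule R))
       | t R B. t \<in> nodes P \<and> rul P t = Some (R, B)}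
   \<union> {(phi P t @ replicate (Suc (length (cov_list B))) 0 @ [i],
        (prms R ! i, gs (\<iota> (cncl R)) (\<iota> (prms R ! i)) (tr R i) B), Some RWeak)
       | t R B i. t \<in> nodes P \<and> rul P t = Some (R, B) \<and> i < length (prms R)}"

definition expand :: "('s \<Rightarrow> 'x set) \<Rightarrow> ('r \<Rightarrow> 's) \<Rightarrow> ('r \<Rightarrow> 's list)
     \<Rightarrow> ('r \<Rightarrow> nat \<Rightarrow> ('x \<times> 'a \<times> 'x) set)
     \<Rightarrow> ('x set \<Rightarrow> 'x set \<Rightarrow> ('x \<times> 'a \<times> 'x) set \<Rightarrow> ('x,'a::bot) board \<Rightarrow> ('x,'a) board)
     \<Rightarrow> ('s \<times> ('x,'a) board, 'r \<times> ('x,'a) board) preproof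
     \<Rightarrow> ('s \<times> ('x,'a) board, 'r rkind) preproof" where
  "expand \<iota> cncl prms tr gs P =
     (let E = exp_entries \<iota> cncl prms tr gs P in
      \<lparr> nodes = fst ` E,
        bud = (\<lambda>s. if \<exists>t\<in>nodes P. phi P t = s \<and> bud P t \<noteq> None
                   then Some (phi P (the (bud P (SOME t. t \<in> nodes P \<and> phi P t = s \<and> bud P t \<noteq> None))))
                   else None),
        lbl = (\<lambda>s. fst (snd (SOME e. e \<in> E \<and> fst e = s))),
        rul = (\<lambda>s. snd (snd (SOME e. e \<in> E \<and> fst e = s))) \<rparr>)"

end

theory Submission
  imports Defs
begin


lemma chip_le_iff: "chip_le \<Theta> a b \<longleftrightarrow> (\<exists>u v. \<Theta> = u @ b # v \<and> (a \<in> set u \<or> a = b))"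
proof
  assume "chip_le \<Theta> a b"
  then obtain i j where ij: "i \<le> j" "j < length \<Theta>" "\<Theta> ! i = a" "\<Theta> ! j = b"
    unfolding chip_le_def by blast
  have "\<Theta> = take j \<Theta> @ b # drop (Suc j) \<Theta>" using ij id_take_nth_drop by metis
  moreover have "a \<in> set (take j \<Theta>) \<or> a = b"
  proof (cases "i = j")
    case False
    then have "i < j" using ij by simp
    then have "take j \<Theta> ! i = a" using ij by simp
    then show ?thesis using \<open>i < j\<close> ij by (metis length_take min.absorb2 less_imp_le nth_mem)
  qed (use ij in auto)
  ultimately show "\<exists>u v. \<Theta> = u @ b # v \<and> (a \<in> set u \<or> a = b)" by blast
next
  assume "\<exists>u v. \<Theta> = u @ b # v \<and> (a \<in> set u \<or> a = b)"
  then obtain u v where uv: "\<Theta> = u @ b # v" "a \<in> set u \<or> a = b" by blast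
  show "chip_le \<Theta> a b"
  proof (cases "a = b")
    case True
    then show ?thesis unfolding chip_le_def using uv
      by (intro exI[of _ "length u"]) auto
  next
    case False
    then obtain i where "i < length u" "u ! i = a" using uv by (auto simp: in_set_conv_nth)
    then show ?thesis unfolding chip_le_def using uv
      by (intro exI[of _ i] exI[of _ "length u"]) (auto simp: nth_append)
  qed
qed

lemma filter_split_Cons:
  "filter Q xs = u @ b # v \<Longrightarrow> \<exists>u1 v1. xs = u1 @ b # v1 \<and> set u \<subseteq> set u1 \<and> v = filter Q v1"
proof (induction xs arbitrary: u)
  case Nil then show ?case by simp
next
  case (Cons x xs)
  show ?case
  proof (cases "Q x")
    case True
    show ?thesis
    proof (cases u)
      case Nil
      then show ?thesis using Cons.prems True by (intro exI[of _ "[]"] exI[of _ xs]) auto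
    next
      case (Cons y u')
      then have "x = y" "filter Q xs = u' @ b # v" using Cons.prems True by auto
      from Cons.IH[OF this(2)] obtain u1 v1 where "xs = u1 @ b # v1" "set u' \<subseteq> set u1" "v = filter Q v1" by blast
      then show ?thesis using \<open>x = y\<close> Cons by (intro exI[of _ "x # u1"] exI[of _ v1]) auto
    qed
  next
    case False
    then have "filter Q xs = u @ b # v" using Cons.prems by auto
    from Cons.IH[OF this] obtain u1 v1 where "xs = u1 @ b # v1" "set u \<subseteq> set u1" "v = filter Q v1" by blast
    then show ?thesis by (intro exI[of _ "x # u1"] exI[of _ v1]) auto
  qed
qed

lemma chip_le_filter: "chip_le \<Theta> a b \<Longrightarrow> Q a \<Longrightarrow> Q b \<Longrightarrow> chip_le (filter Q \<Theta>) a b"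
proof -
  assume "chip_le \<Theta> a b" "Q a" "Q b"
  then obtain u v where "\<Theta> = u @ b # v" "a \<in> set u \<or> a = b" unfolding chip_le_iff by blast
  then show ?thesis unfolding chip_le_iff using \<open>Q a\<close> \<open>Q b\<close>
    by (intro exI[of _ "filter Q u"] exI[of _ "filter Q v"]) auto
qed

lemma chip_le_filter_rev: "chip_le (filter Q \<Theta>) a b \<Longrightarrow> chip_le \<Theta> a b"
  unfolding chip_le_iff by (metis filter_split_Cons subsetD)

lemma chip_le_mem: "chip_le \<Theta> a b \<Longrightarrow> a \<in> set \<Theta> \<and> b \<in> set \<Theta>"
  unfolding chip_le_def by auto

lemma chip_le_refl: "a \<in> set \<Theta> \<Longrightarrow> chip_le \<Theta> a a"
  unfolding chip_le_def by (auto simp: in_set_conv_nth)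

lemma chip_le_antisym: "distinct \<Theta> \<Longrightarrow> chip_le \<Theta> a b \<Longrightarrow> chip_le \<Theta> b a \<Longrightarrow> a = b"
  unfolding chip_le_def by (metis le_antisym le_less_trans less_or_eq_imp_le nth_eq_iff_index_eq)

definition estep :: "nat list \<Rightarrow> nat list \<Rightarrow> bool" where
  "estep C C' \<longleftrightarrow> (\<exists>Q ns. C' = filter Q C @ ns \<and> set ns \<inter> set C = {})"

lemma estep_filter: "estep C (filter Q C)"
  unfolding estep_def by (intro exI[of _ Q] exI[of _ "[]"]) auto

lemma estep_prefix:
  assumes "estep C C'" "prefix \<theta> C" "set \<theta> \<subseteq> set C'"
  shows "prefix \<theta> C'"
proof -
  obtain Q ns where C': "C' = filter Q C @ ns" "set ns \<inter> set C = {}" using assms(1) unfolding estep_def by blast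
  obtain r where C: "C = \<theta> @ r" using assms(2) prefixE by metis
  have "\<forall>z\<in>set \<theta>. Q z"
  proof
    fix z assume z: "z \<in> set \<theta>"
    then have "z \<in> set C'" "z \<in> set C" using assms(3) C by auto
    then have "z \<in> set (filter Q C)" using C' by auto
    then show "Q z" by simp
  qed
  then have "filter Q \<theta> = \<theta>" by (simp add: filter_id_conv)
  then show ?thesis using C C' by simp
qed

lemma estep_chain_order:
  assumes "\<forall>j. a \<le> j \<and> j < b \<longrightarrow> estep (C j) (C (Suc j))"
    "\<forall>j. a \<le> j \<and> j \<le> b \<longrightarrow> \<gamma> \<in> set (C j)" "\<delta> \<notin> set (C a)" "\<delta> \<in> set (C b)" "a \<le> b"
  shows "\<exists>u v. C b = u @ \<gamma> # v \<and> \<delta> \<in> set v"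
  using assms
proof (induction b)
  case 0 then show ?case by simp
next
  case (Suc b)
  show ?case
  proof (cases "a = Suc b")
    case True then show ?thesis using Suc.prems by simp
  next
    case False
    then have ab: "a \<le> b" using Suc.prems by simp
    obtain Q ns where st: "C (Suc b) = filter Q (C b) @ ns" "set ns \<inter> set (C b) = {}"
      using Suc.prems(1) ab unfolding estep_def by auto
    have gb: "\<gamma> \<in> set (C b)" "\<gamma> \<in> set (C (Suc b))" using Suc.prems(2) ab by auto
    then have "\<gamma> \<notin> set ns" using st by auto
    then have Qg: "\<gamma> \<in> set (filter Q (C b))" using gb st by auto
    show ?thesis
    proof (cases "\<delta> \<in> set (C b)")
      case True
      then obtain u v where uv: "C b = u @ \<gamma> # v" "\<delta> \<in> set v" using Suc.IH Suc.prems ab by auto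
      have "\<delta> \<notin> set ns" using True st by auto
      then have "\<delta> \<in> set (filter Q (C b))" using Suc.prems(4) st by auto
      then have "Q \<delta>" "Q \<gamma>" using Qg by auto
      then show ?thesis using uv st
        by (intro exI[of _ "filter Q u"] exI[of _ "filter Q v @ ns"]) auto
    next
      case False
      then have "\<delta> \<in> set ns" using Suc.prems(4) st by auto
      obtain u v where "filter Q (C b) = u @ \<gamma> # v" using Qg split_list by metis
      then show ?thesis using st \<open>\<delta> \<in> set ns\<close>
        by (intro exI[of _ u] exI[of _ "v @ ns"]) auto
    qed
  qed
qed

lemma estep_cycle:
  assumes "\<forall>j<n. estep (C j) (C (Suc j))" "C n = C 0" "\<forall>j\<le>n. \<gamma> \<in> set (C j)"
    "distinct (C 0)" "C 0 = u @ \<gamma> # v" "\<delta> \<in> set u" "j \<le> n"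
  shows "\<delta> \<in> set (C j)"
proof (rule ccontr)
  assume nd: "\<delta> \<notin> set (C j)"
  have "\<delta> \<in> set (C n)" using assms by simp
  then obtain u' v' where uv': "C n = u' @ \<gamma> # v'" "\<delta> \<in> set v'"
    using estep_chain_order[of j n C \<gamma> \<delta>] assms nd by auto
  have c1: "chip_le (C 0) \<delta> \<gamma>" unfolding chip_le_iff using assms by blast
  obtain v1 v2 where "v' = v1 @ \<delta> # v2" using uv'(2) split_list by metis
  then have "C 0 = (u' @ \<gamma> # v1) @ \<delta> # v2" using uv' assms by simp
  then have c2: "chip_le (C 0) \<gamma> \<delta>" unfolding chip_le_iff
    by (intro exI[of _ "u' @ \<gamma> # v1"] exI[of _ v2]) auto
  have "\<delta> = \<gamma>" using chip_le_antisym[OF assms(4) c1 c2] .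
  then show False using assms(4,5,6) by auto
qed

lemma estep_compose:
  assumes "\<forall>j<n. estep (C j) (C (Suc j))" "\<forall>j\<le>n. set (C 0) \<inter> set (C n) \<subseteq> set (C j)"
  shows "estep (C 0) (C n)"
proof -
  let ?D = "set (C 0) \<inter> set (C n)"
  have "\<exists>Q ns. C m = filter Q (C 0) @ ns \<and> set ns \<inter> ?D = {}" if "m \<le> n" for m
    using that
  proof (induction m)
    case 0 then show ?case by (intro exI[of _ "\<lambda>_. True"] exI[of _ "[]"]) auto
  next
    case (Suc m)
    then obtain Q ns where IH: "C m = filter Q (C 0) @ ns" "set ns \<inter> ?D = {}" by auto
    obtain Q' ns' where st: "C (Suc m) = filter Q' (C m) @ ns'" "set ns' \<inter> set (C m) = {}"
      using assms(1) Suc.prems unfolding estep_def by (meson Suc_le_lessD)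
    have "?D \<subseteq> set (C m)" using assms(2) Suc.prems by auto
    then have "set ns' \<inter> ?D = {}" using st by auto
    then show ?case using IH st
      by (intro exI[of _ "\<lambda>z. Q z \<and> Q' z"] exI[of _ "filter Q' ns @ ns'"]) (auto simp: filter_filter)
  qed
  then obtain Q ns where "C n = filter Q (C 0) @ ns" "set ns \<inter> ?D = {}" by blast
  moreover then have "set ns \<inter> set (C 0) = {}" by auto
  ultimately show ?thesis unfolding estep_def by blast
qed

lemma chips_iff: "z \<in> chips \<sigma> \<longleftrightarrow> (\<exists>x a S. S \<in> \<sigma> x a \<and> z \<in> S)"
  unfolding chips_def by blast

lemma set_restrict: "set (restrict_ctrl \<Theta> \<sigma>) = set \<Theta> \<inter> chips \<sigma>"
  unfolding restrict_ctrl_def by auto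

lemma board_on_reset:
  assumes "board_on X B" shows "board_on X (reset_board \<gamma> B)"
proof -
  define \<sigma>' where "\<sigma>' = (\<lambda>x a. (\<lambda>S. if \<gamma> \<in> S then {z\<in>S. chip_le (fst B) z \<gamma>} else S) ` snd B x a)"
  have rb: "reset_board \<gamma> B = (restrict_ctrl (fst B) \<sigma>', \<sigma>')" unfolding reset_board_def \<sigma>'_def Let_def by simp
  have sub: "\<exists>S0 \<in> snd B x a. S \<subseteq> S0" if "S \<in> \<sigma>' x a" for S x a
    using that unfolding \<sigma>'_def by auto
  have B: "finite X" "distinct (fst B)" "\<forall>x a. x \<notin> X \<longrightarrow> snd B x a = {}" "\<forall>x a S. S \<in> snd B x a \<longrightarrow> S \<subseteq> set (fst B)"
    using assms unfolding board_on_def by auto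
  have 1: "\<forall>x a. x \<notin> X \<longrightarrow> \<sigma>' x a = {}" using B(3) unfolding \<sigma>'_def by simp
  have 2: "S \<subseteq> set (restrict_ctrl (fst B) \<sigma>')" if "S \<in> \<sigma>' x a" for x a S
  proof
    fix z assume "z \<in> S"
    then have "z \<in> chips \<sigma>'" using that chips_iff by metis
    moreover have "z \<in> set (fst B)" using sub[OF that] B(4) \<open>z \<in> S\<close> by blast
    ultimately show "z \<in> set (restrict_ctrl (fst B) \<sigma>')" by (simp add: set_restrict)
  qed
  show ?thesis unfolding rb board_on_def using B 1 2
    by (auto simp: set_restrict restrict_ctrl_def)
qed

lemma fst_reset: "fst (reset_board \<gamma> B) = filter (\<lambda>z. z \<in> chips (snd (reset_board \<gamma> B))) (fst B)"
  unfolding reset_board_def Let_def restrict_ctrl_def by simp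

lemma estep_reset: "estep (fst B) (fst (reset_board \<gamma> B))"
  unfolding fst_reset by (rule estep_filter)

lemma fst_thin: "fst (thin_board B) = filter (\<lambda>z. z \<in> chips (snd (thin_board B))) (fst B)"
  unfolding thin_board_def Let_def restrict_ctrl_def by simp

lemma estep_thin: "estep (fst B) (fst (thin_board B))"
  unfolding fst_thin by (rule estep_filter)

lemma weakening_thin: "weakening B (thin_board B)"
  unfolding weakening_def by (simp add: thin_board_def Let_def)

lemma fst_pop[simp]: "fst (pop_board P B) = fst B"
  unfolding pop_board_def by simp

lemma board_on_pop:
  assumes "board_on X B" "P \<subseteq> X" shows "board_on X (pop_board P B)"
proof -
  have B: "finite X" "distinct (fst B)" "\<forall>x a. x \<notin> X \<longrightarrow> snd B x a = {}" "\<forall>x a S. S \<in> snd B x a \<longrightarrow> S \<subseteq> set (fst B)"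
     "set (fst B) \<subseteq> chips (snd B)"
    using assms unfolding board_on_def by auto
  have "chips (snd B) \<subseteq> chips (snd (pop_board P B))"
  proof
    fix z assume "z \<in> chips (snd B)"
    then obtain x a S where "S \<in> snd B x a" "z \<in> S" using chips_iff by metis
    then have "S \<in> snd (pop_board P B) x a" unfolding pop_board_def by auto
    then show "z \<in> chips (snd (pop_board P B))" using chips_iff \<open>z \<in> S\<close> by metis
  qed
  then show ?thesis using B assms(2) unfolding board_on_def
    by (auto simp: pop_board_def split: if_splits)
qed

definition sucs :: "('x,'a::sup) board \<Rightarrow> ('x \<times> 'a \<times> 'x) set \<Rightarrow> 'x \<Rightarrow> 'a \<Rightarrow> nat set set" where
  "sucs B r y a = {S. \<exists>x b c. S \<in> snd B x b \<and> (x, c, y) \<in> r \<and> a = sup b c}"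

lemma successor_D:
  assumes "successor \<alpha> r B B'"
  shows "\<exists>fr ns. inj_on fr {y. sucs B r y \<alpha> \<noteq> {}}
           \<and> fr ` {y. sucs B r y \<alpha> \<noteq> {}} \<inter> set (fst B) = {}
           \<and> snd B' = (\<lambda>y a. if a = \<alpha> then {}
                              else if a = bot then sucs B r y bot \<union> (insert (fr y)) ` sucs B r y \<alpha>
                              else sucs B r y a)
           \<and> distinct ns \<and> set ns = fr ` {y. sucs B r y \<alpha> \<noteq> {}}
           \<and> fst B' = restrict_ctrl (fst B) (snd B') @ ns"
  using assms unfolding successor_def Let_def sucs_def .

lemma estep_successor:
  assumes "successor \<alpha> r B B'" shows "estep (fst B) (fst B')"
proof -
  from successor_D[OF assms] obtain fr ns where "fr ` {y. sucs B r y \<alpha> \<noteq> {}} \<inter> set (fst B) = {}"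
     "set ns = fr ` {y. sucs B r y \<alpha> \<noteq> {}}"
     "fst B' = restrict_ctrl (fst B) (snd B') @ ns"
    by (elim exE conjE) (rule that, assumption+)
  then show ?thesis unfolding estep_def restrict_ctrl_def
    by (intro exI[of _ "\<lambda>z. z \<in> chips (snd B')"] exI[of _ ns]) simp
qed

lemma board_on_successor:
  fixes \<alpha> :: "'a::{semilattice_sup,order_bot}"
  assumes "board_on X B" "successor \<alpha> r B B'" "\<forall>x c y. (x,c,y)\<in>r \<longrightarrow> y \<in> Y" "finite Y" "\<alpha> \<noteq> bot"
  shows "board_on Y B'"
proof -
  define \<Theta> where "\<Theta> = fst B"
  define Ya where "Ya = {y. sucs B r y \<alpha> \<noteq> {}}"
  obtain fr ns where fr: "inj_on fr Ya" "fr ` Ya \<inter> set \<Theta> = {}"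
    and sig: "snd B' = (\<lambda>y a. if a = \<alpha> then {}
                              else if a = bot then sucs B r y bot \<union> (insert (fr y)) ` sucs B r y \<alpha>
                              else sucs B r y a)"
    and ns: "distinct ns" "set ns = fr ` Ya" "fst B' = restrict_ctrl \<Theta> (snd B') @ ns"
    using successor_D[OF assms(2)] unfolding \<Theta>_def[symmetric] Ya_def[symmetric] by (elim exE conjE) (rule that, assumption+)
  have B: "distinct \<Theta>" "\<forall>x a S. S \<in> snd B x a \<longrightarrow> S \<subseteq> set \<Theta>"
    using assms(1) unfolding board_on_def \<Theta>_def by auto
  have sY: "sucs B r y a = {}" if "y \<notin> Y" for y a
    using that assms(3) unfolding sucs_def by blast
  have sT: "S \<subseteq> set \<Theta>" if "S \<in> sucs B r y a" for S y a
    using that B(2) unfolding sucs_def by blast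
  have d: "distinct (fst B')"
    using ns fr B(1) unfolding restrict_ctrl_def by (auto simp: set_restrict)
  have out: "\<forall>x a. x \<notin> Y \<longrightarrow> snd B' x a = {}"
    using sY sig by auto
  have st: "S \<subseteq> set (fst B')" if "S \<in> snd B' x a" for x a S
  proof
    fix z assume z: "z \<in> S"
    have zc: "z \<in> chips (snd B')" using that z chips_iff by metis
    show "z \<in> set (fst B')"
    proof (cases "a = \<alpha>")
      case True then show ?thesis using that sig by simp
    next
      case F: False
      show ?thesis
      proof (cases "a = bot")
        case True
        then have "S \<in> sucs B r x bot \<or> (\<exists>S0 \<in> sucs B r x \<alpha>. S = insert (fr x) S0)" using that sig F by auto
        then show ?thesis
        proof
          assume "S \<in> sucs B r x bot" then show ?thesis using sT z zc ns(3) by (auto simp: set_restrict)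
        next
          assume "\<exists>S0 \<in> sucs B r x \<alpha>. S = insert (fr x) S0"
          then obtain S0 where S0: "S0 \<in> sucs B r x \<alpha>" "S = insert (fr x) S0" by blast
          then have "x \<in> Ya" unfolding Ya_def by auto
          then show ?thesis using S0 sT z zc ns by (auto simp: set_restrict)
        qed
      next
        case False
        then have "S \<in> sucs B r x a" using that sig F by auto
        then show ?thesis using sT z zc ns(3) by (auto simp: set_restrict)
      qed
    qed
  qed
  have ch: "set (fst B') \<subseteq> chips (snd B')"
  proof
    fix z assume "z \<in> set (fst B')"
    then have "z \<in> set (restrict_ctrl \<Theta> (snd B')) \<or> z \<in> set ns" using ns by auto
    then show "z \<in> chips (snd B')"
    proof
      assume "z \<in> set ns"
      then obtain y where y: "y \<in> Ya" "z = fr y" using ns by auto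
      then obtain S0 where "S0 \<in> sucs B r y \<alpha>" unfolding Ya_def by auto
      then have "insert (fr y) S0 \<in> snd B' y bot" using sig assms(5) by auto
      then show ?thesis using y chips_iff by (metis insertI1)
    qed (auto simp: set_restrict)
  qed
  show ?thesis unfolding board_on_def using d out st ch assms(4) by blast
qed



lemma reset_stage_0[simp]: "reset_stage B 0 = B"
  unfolding reset_stage_def by simp

lemma reset_stage_Suc:
  "j < length (cov_list B) \<Longrightarrow> reset_stage B (Suc j) = reset_board (rev (cov_list B) ! j) (reset_stage B j)"
  unfolding reset_stage_def by (simp add: take_Suc_conv_app_nth)

lemma board_on_fold_reset: "board_on X B \<Longrightarrow> board_on X (fold reset_board xs B)"
proof (induction xs arbitrary: B)
  case (Cons x xs)
  then show ?case using board_on_reset[OF Cons.prems, of x] by simp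
qed simp

lemma board_on_reset_stage: "board_on X B \<Longrightarrow> board_on X (reset_stage B j)"
  unfolding reset_stage_def by (rule board_on_fold_reset)

lemma board_on_chips_sub: "board_on X B \<Longrightarrow> chips (snd B) \<subseteq> set (fst B)"
  unfolding board_on_def chips_def by blast

lemma cov_order:
  assumes "distinct (fst B)" "j < i" "i < length (cov_list B)"
  shows "chip_le (fst B) (rev (cov_list B) ! i) (rev (cov_list B) ! j)"
proof -
  let ?c = "cov_list B" let ?k = "length (cov_list B)"
  have "rev ?c ! i = ?c ! (?k - Suc i)" "rev ?c ! j = ?c ! (?k - Suc j)"
    using assms by (auto simp: rev_nth)
  moreover have "chip_le ?c (?c ! (?k - Suc i)) (?c ! (?k - Suc j))"
    unfolding chip_le_def using assms by (intro exI[of _ "?k - Suc i"] exI[of _ "?k - Suc j"]) auto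
  ultimately show ?thesis unfolding cov_list_def by (metis chip_le_filter_rev)
qed

lemma reset_stage_inv:
  assumes bo: "board_on X B" and jk: "j \<le> length (cov_list B)"
  shows "(\<exists>Q. fst (reset_stage B j) = filter Q (fst B))
    \<and> (\<forall>x a S. S \<in> snd (reset_stage B j) x a \<longrightarrow> S \<in> snd B x a \<or> (\<exists>i<j. is_max_of (fst B) (rev (cov_list B) ! i) S))
    \<and> (\<forall>i. j \<le> i \<and> i < length (cov_list B) \<longrightarrow> rev (cov_list B) ! i \<in> chips (snd (reset_stage B j)))"
  using jk
proof (induction j)
  case 0
  have "rev (cov_list B) ! i \<in> chips (snd B)" if "i < length (cov_list B)" for i
  proof -
    have "rev (cov_list B) ! i \<in> set (fst B)" using that unfolding cov_list_def
      by (metis filter_is_subset length_rev nth_mem set_rev subsetD)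
    then show ?thesis using bo unfolding board_on_def by auto
  qed
  then show ?case by (auto intro: exI[of _ "\<lambda>_. True"])
next
  case (Suc j)
  let ?gs = "rev (cov_list B)" let ?Bj = "reset_stage B j" let ?\<gamma> = "?gs ! j"
  have jk: "j < length (cov_list B)" using Suc.prems by simp
  have IH: "(\<exists>Q. fst ?Bj = filter Q (fst B))
    \<and> (\<forall>x a S. S \<in> snd ?Bj x a \<longrightarrow> S \<in> snd B x a \<or> (\<exists>i<j. is_max_of (fst B) (?gs ! i) S))
    \<and> (\<forall>i. j \<le> i \<and> i < length (cov_list B) \<longrightarrow> ?gs ! i \<in> chips (snd ?Bj))"
    using Suc.IH jk by simp
  then obtain Q where Q: "fst ?Bj = filter Q (fst B)"
    and IHb: "\<forall>x a S. S \<in> snd ?Bj x a \<longrightarrow> S \<in> snd B x a \<or> (\<exists>i<j. is_max_of (fst B) (?gs ! i) S)"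
    and IHc: "\<forall>i. j \<le> i \<and> i < length (cov_list B) \<longrightarrow> ?gs ! i \<in> chips (snd ?Bj)"
    by (elim conjE exE)
  have boj: "board_on X ?Bj" using board_on_reset_stage[OF bo] .
  have dB: "distinct (fst B)" using bo unfolding board_on_def by auto
  have "?\<gamma> \<in> chips (snd ?Bj)" using IHc jk by simp
  then have gin: "?\<gamma> \<in> set (fst ?Bj)" using board_on_chips_sub[OF boj] by blast
  have eq: "reset_stage B (Suc j) = reset_board ?\<gamma> ?Bj" using reset_stage_Suc[OF jk] .
  have snd_eq: "snd (reset_board ?\<gamma> ?Bj) x a = (\<lambda>S. if ?\<gamma> \<in> S then {z\<in>S. chip_le (fst ?Bj) z ?\<gamma>} else S) ` snd ?Bj x a" for x a
    unfolding reset_board_def Let_def by simp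
  have a: "\<exists>Q. fst (reset_stage B (Suc j)) = filter Q (fst B)"
    unfolding eq fst_reset Q by (auto simp: filter_filter)
  have b: "S \<in> snd B x a \<or> (\<exists>i<Suc j. is_max_of (fst B) (?gs ! i) S)"
    if "S \<in> snd (reset_stage B (Suc j)) x a" for x a S
  proof -
    have "S \<in> (\<lambda>S. if ?\<gamma> \<in> S then {z\<in>S. chip_le (fst ?Bj) z ?\<gamma>} else S) ` snd ?Bj x a"
      using that unfolding eq snd_eq .
    then obtain S0 where S0a: "S0 \<in> snd ?Bj x a"
      and S0b: "S = (\<lambda>S. if ?\<gamma> \<in> S then {z\<in>S. chip_le (fst ?Bj) z ?\<gamma>} else S) S0"
      by (rule imageE)
    have S0: "S0 \<in> snd ?Bj x a" "S = (if ?\<gamma> \<in> S0 then {z\<in>S0. chip_le (fst ?Bj) z ?\<gamma>} else S0)"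
      using S0a S0b by simp_all
    show ?thesis
    proof (cases "?\<gamma> \<in> S0")
      case True
      then have Seq: "S = {z\<in>S0. chip_le (fst ?Bj) z ?\<gamma>}" using S0 by simp
      have "?\<gamma> \<in> S" unfolding Seq using True chip_le_refl[OF gin] by simp
      moreover have "\<forall>z\<in>S. chip_le (fst B) z ?\<gamma>"
      proof
        fix z assume "z \<in> S"
        then have "chip_le (filter Q (fst B)) z ?\<gamma>" unfolding Seq Q[symmetric] by simp
        then show "chip_le (fst B) z ?\<gamma>" by (rule chip_le_filter_rev)
      qed
      ultimately have "is_max_of (fst B) ?\<gamma> S" unfolding is_max_of_def by blast
      then show ?thesis by (intro disjI2 exI[of _ j]) simp
    next
      case False
      then have Seq: "S = S0" using S0 by simp
      have "S0 \<in> snd B x a \<or> (\<exists>i<j. is_max_of (fst B) (?gs ! i) S0)" using IHb S0(1) by blast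
      then show ?thesis unfolding Seq using less_SucI by blast
    qed
  qed
  have c: "?gs ! i \<in> chips (snd (reset_stage B (Suc j)))" if "Suc j \<le> i" "i < length (cov_list B)" for i
  proof -
    have "?gs ! i \<in> chips (snd ?Bj)" using IHc that by simp
    then obtain x a S0 where S0: "S0 \<in> snd ?Bj x a" "?gs ! i \<in> S0" unfolding chips_iff by blast
    let ?f = "\<lambda>S. if ?\<gamma> \<in> S then {z\<in>S. chip_le (fst ?Bj) z ?\<gamma>} else S"
    have "?f S0 \<in> ?f ` snd ?Bj x a" using S0(1) by (rule imageI)
    then have Sin: "?f S0 \<in> snd (reset_stage B (Suc j)) x a" unfolding eq snd_eq .
    have "?gs ! i \<in> ?f S0"
    proof (cases "?\<gamma> \<in> S0")
      case True
      have ji: "j < i" using that by simp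
      have o: "chip_le (fst B) (?gs ! i) ?\<gamma>" using cov_order[OF dB ji that(2)] .
      have gi: "?gs ! i \<in> set (fst ?Bj)" using S0 boj unfolding board_on_def by blast
      have "Q (?gs ! i)" "Q ?\<gamma>" using gi gin unfolding Q by auto
      then have "chip_le (filter Q (fst B)) (?gs ! i) ?\<gamma>" by (rule chip_le_filter[OF o])
      then have "chip_le (fst ?Bj) (?gs ! i) ?\<gamma>" unfolding Q .
      then show ?thesis using True S0 by simp
    next
      case False then show ?thesis using S0 by simp
    qed
    then show ?thesis using Sin unfolding chips_iff by blast
  qed
  show ?case using a b c by blast
qed

lemma reset_stage_covered:
  assumes bo: "board_on X B" and jk: "j < length (cov_list B)"
  shows "covered (reset_stage B j) (rev (cov_list B) ! j)"
proof -
  let ?gs = "rev (cov_list B)" let ?Bj = "reset_stage B j" let ?\<gamma> = "?gs ! j"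
  have I: "(\<exists>Q. fst ?Bj = filter Q (fst B))
    \<and> (\<forall>x a S. S \<in> snd ?Bj x a \<longrightarrow> S \<in> snd B x a \<or> (\<exists>i<j. is_max_of (fst B) (?gs ! i) S))
    \<and> (\<forall>i. j \<le> i \<and> i < length (cov_list B) \<longrightarrow> ?gs ! i \<in> chips (snd ?Bj))"
    using reset_stage_inv[OF bo] jk by simp
  then obtain Q where Q: "fst ?Bj = filter Q (fst B)"
    and Ib: "\<forall>x a S. S \<in> snd ?Bj x a \<longrightarrow> S \<in> snd B x a \<or> (\<exists>i<j. is_max_of (fst B) (?gs ! i) S)"
    and Ic: "\<forall>i. j \<le> i \<and> i < length (cov_list B) \<longrightarrow> ?gs ! i \<in> chips (snd ?Bj)"
    by (elim conjE exE)
  have boj: "board_on X ?Bj" using board_on_reset_stage[OF bo] .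
  have dB: "distinct (fst B)" using bo unfolding board_on_def by auto
  have "?\<gamma> \<in> chips (snd ?Bj)" using Ic jk by simp
  then have gin: "?\<gamma> \<in> set (fst ?Bj)" using board_on_chips_sub[OF boj] by blast
  have "?\<gamma> \<in> set (cov_list B)" using jk by (metis length_rev nth_mem set_rev)
  then have covB: "covered B ?\<gamma>" unfolding cov_list_def by simp
  have dc: "distinct ?gs" using dB unfolding cov_list_def by simp
  have "\<not> is_max_of (fst ?Bj) ?\<gamma> S" if "S \<in> snd ?Bj x a" for x a S
  proof
    assume m: "is_max_of (fst ?Bj) ?\<gamma> S"
    have m': "is_max_of (fst B) ?\<gamma> S" unfolding is_max_of_def
    proof
      show "?\<gamma> \<in> S" using m unfolding is_max_of_def by blast
      show "\<forall>z\<in>S. chip_le (fst B) z ?\<gamma>"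
      proof
        fix z assume "z \<in> S"
        then have "chip_le (filter Q (fst B)) z ?\<gamma>" using m unfolding is_max_of_def Q by blast
        then show "chip_le (fst B) z ?\<gamma>" by (rule chip_le_filter_rev)
      qed
    qed
    from Ib that have "S \<in> snd B x a \<or> (\<exists>i<j. is_max_of (fst B) (?gs ! i) S)" by blast
    then show False
    proof
      assume "S \<in> snd B x a" then show False using covB m' unfolding covered_def by blast
    next
      assume "\<exists>i<j. is_max_of (fst B) (?gs ! i) S"
      then obtain i where i: "i < j" "is_max_of (fst B) (?gs ! i) S" by blast
      have c1: "chip_le (fst B) (?gs ! i) ?\<gamma>" using m' i(2) unfolding is_max_of_def by blast
      have c2: "chip_le (fst B) ?\<gamma> (?gs ! i)" using m' i(2) unfolding is_max_of_def by blast
      have "?gs ! i = ?\<gamma>" using chip_le_antisym[OF dB c1 c2] .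
      moreover have "i < length ?gs" "j < length ?gs" using i jk by auto
      ultimately have "i = j" using dc by (simp add: nth_eq_iff_index_eq)
      then show False using i by simp
    qed
  qed
  then show ?thesis unfolding covered_def using gin by blast
qed



lemma phi_aux_append: "phi_aux c p (xs @ ys) = phi_aux c p xs @ phi_aux c (p @ xs) ys"
  by (induction xs arbitrary: p) auto

lemma phi_aux_nil_iff[simp]: "phi_aux c p w = [] \<longleftrightarrow> w = []"
  by (cases w) auto

lemma phi_aux_snoc: "phi_aux c p (w @ [i]) = phi_aux c p w @ replicate (Suc (c (p @ w))) 0 @ [i, 0]"
  by (simp add: phi_aux_append)

lemma phi_aux_inj:
  "phi_aux c p w @ x = phi_aux c p w' @ x' \<Longrightarrow> length x \<le> Suc (c (p@w)) + 1
   \<Longrightarrow> length x' \<le> Suc (c (p@w')) + 1 \<Longrightarrow> w = w' \<and> x = x'"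
proof (induction w arbitrary: p w')
  case Nil
  show ?case
  proof (cases w')
    case (Cons i w'')
    have "x = phi_aux c p w' @ x'" using Nil.prems(1) by simp
    then have "length x = length (phi_aux c p w') + length x'" by simp
    moreover have "length (phi_aux c p w') \<ge> Suc (c p) + 2" using Cons by simp
    ultimately show ?thesis using Nil.prems(2) by simp
  qed (use Nil.prems in simp)
next
  case (Cons i w1)
  show ?case
  proof (cases w')
    case Nil
    then have "x' = phi_aux c p (i # w1) @ x" using Cons.prems(1) by simp
    then have "length x' = length (phi_aux c p (i # w1)) + length x" by simp
    moreover have "length (phi_aux c p (i # w1)) \<ge> Suc (c p) + 2" by simp
    ultimately show ?thesis using Cons.prems(3) Nil by simp
  next
    case (Cons i' w1')
    then have "i = i'" "phi_aux c (p @ [i]) w1 @ x = phi_aux c (p @ [i]) w1' @ x'"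
      using Cons.prems(1) by auto
    then show ?thesis using Cons.IH[of "p @ [i]" w1'] Cons.prems Cons by simp
  qed
qed

lemma phi_aux_child:
  "phi_aux c p w' @ x' = phi_aux c p w @ x @ [j] \<Longrightarrow> length x \<le> Suc (c (p@w)) + 1
   \<Longrightarrow> length x' \<le> Suc (c (p@w')) + 1
   \<Longrightarrow> (w' = w \<and> x' = x @ [j]) \<or> (\<exists>i. w' = w @ [i] \<and> x' = [] \<and> x @ [j] = replicate (Suc (c (p@w))) 0 @ [i, 0])"
proof (induction w arbitrary: p w')
  case Nil
  show ?case
  proof (cases w')
    case (Cons i w'')
    have "x @ [j] = phi_aux c p w' @ x'" using Nil.prems(1) by simp
    then have "length (x @ [j]) = length (phi_aux c p w') + length x'" by simp
    moreover have "length (phi_aux c p w') = Suc (c p) + 2 + length (phi_aux c (p @ [i]) w'')"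
      unfolding Cons by simp
    ultimately have L: "Suc (length x) = Suc (c p) + 2 + length (phi_aux c (p @ [i]) w'') + length x'"
      by simp
    then have "length (phi_aux c (p @ [i]) w'') = 0" "length x' = 0" using Nil.prems(2) by simp_all
    then have "w'' = []" "x' = []" by simp_all
    then show ?thesis using Nil.prems(1) Cons by simp
  qed (use Nil.prems in simp)
next
  case (Cons i w1)
  show ?case
  proof (cases w')
    case Nil
    then have "x' = phi_aux c p (i # w1) @ x @ [j]" using Cons.prems(1) by simp
    then have "length x' = length (phi_aux c p (i # w1)) + length x + 1" by simp
    moreover have "length (phi_aux c p (i # w1)) \<ge> Suc (c p) + 2" by simp
    ultimately show ?thesis using Cons.prems(3) Nil by simp
  next
    case (Cons i' w1')
    then have "i = i'" "phi_aux c (p @ [i]) w1' @ x' = phi_aux c (p @ [i]) w1 @ x @ [j]"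
      using Cons.prems(1) by auto
    then show ?thesis using Cons.IH[of "p @ [i]" w1'] Cons.prems Cons by simp
  qed
qed

lemma prefix_rep_snoc:
  "prefix y (replicate n 0 @ [i]) \<Longrightarrow> (y = replicate (length y) 0 \<and> length y \<le> n) \<or> y = replicate n 0 @ [i]"
proof -
  assume "prefix y (replicate n 0 @ [i])"
  then obtain z where "replicate n 0 @ [i] = y @ z" by (rule prefixE)
  then have y: "y = take (length y) (replicate n 0 @ [i])" by simp
  show ?thesis
  proof (cases "length y \<le> n")
    case True
    then have "take (length y) (replicate n 0 @ [i]) = replicate (length y) 0" by simp
    then show ?thesis using y True by simp
  next
    case False
    then have "length y = Suc n" using \<open>prefix y _\<close> prefix_length_le by fastforce
    then show ?thesis using y by simp
  qed
qed

lemma phi_aux_prefix: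
  "prefix s (phi_aux c p w) \<Longrightarrow> s = phi_aux c p w \<or>
    (\<exists>m<length w. \<exists>y. s = phi_aux c p (take m w) @ y \<and> prefix y (replicate (Suc (c (p @ take m w))) 0 @ [w ! m]))"
proof (induction w arbitrary: s rule: rev_induct)
  case Nil then show ?case by simp
next
  case (snoc i w)
  have "prefix s (phi_aux c p w @ (replicate (Suc (c (p @ w))) 0 @ [i]) @ [0])"
    using snoc.prems by (simp add: phi_aux_snoc)
  then have "prefix s (phi_aux c p w) \<or> (\<exists>us. s = phi_aux c p w @ us \<and> prefix us ((replicate (Suc (c (p @ w))) 0 @ [i]) @ [0]))"
    by (simp add: prefix_append)
  then show ?case
  proof
    assume "prefix s (phi_aux c p w)"
    from snoc.IH[OF this] show ?thesis
    proof
      assume "s = phi_aux c p w"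
      then show ?thesis by (intro disjI2 exI[of _ "length w"]) auto
    next
      assume "\<exists>m<length w. \<exists>y. s = phi_aux c p (take m w) @ y \<and> prefix y (replicate (Suc (c (p @ take m w))) 0 @ [w ! m])"
      then obtain m y where "m < length w" "s = phi_aux c p (take m w) @ y" "prefix y (replicate (Suc (c (p @ take m w))) 0 @ [w ! m])" by blast
      then show ?thesis by (intro disjI2 exI[of _ m]) (auto simp: nth_append)
    qed
  next
    assume "\<exists>us. s = phi_aux c p w @ us \<and> prefix us ((replicate (Suc (c (p @ w))) 0 @ [i]) @ [0])"
    then obtain us where us: "s = phi_aux c p w @ us" "prefix us ((replicate (Suc (c (p @ w))) 0 @ [i]) @ [0])" by blast
    from us(2) have "prefix us (replicate (Suc (c (p @ w))) 0 @ [i]) \<or> us = (replicate (Suc (c (p @ w))) 0 @ [i]) @ [0]"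
      by (metis prefix_snoc)
    then show ?thesis
    proof
      assume "prefix us (replicate (Suc (c (p @ w))) 0 @ [i])"
      then show ?thesis using us by (intro disjI2 exI[of _ "length w"]) auto
    next
      assume "us = (replicate (Suc (c (p @ w))) 0 @ [i]) @ [0]"
      then show ?thesis using us by (simp add: phi_aux_snoc)
    qed
  qed
qed




locale ctx =
  fixes \<alpha> :: "'a::{finite,semilattice_sup,order_bot}"
    and \<iota> :: "'s::finite \<Rightarrow> 'x set"
    and cncl :: "'r::finite \<Rightarrow> 's"
    and prms :: "'r \<Rightarrow> 's list"
    and tr :: "'r \<Rightarrow> nat \<Rightarrow> ('x \<times> 'a \<times> 'x) set"
    and gs :: "'x set \<Rightarrow> 'x set \<Rightarrow> ('x \<times> 'a \<times> 'x) set \<Rightarrow> ('x,'a) board \<Rightarrow> ('x,'a) board"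
    and P :: "('s \<times> ('x,'a) board, 'r \<times> ('x,'a) board) preproof"
  assumes abot: "\<alpha> \<noteq> bot"
    and fin: "\<forall>\<Gamma>. finite (\<iota> \<Gamma>)"
    and trsub: "\<forall>R i. i < length (prms R) \<longrightarrow> tr R i \<subseteq> \<iota> (cncl R) \<times> UNIV \<times> \<iota> (prms R ! i)"
    and gok: "greedy_choice_ok \<alpha> (Kmax \<iota>) \<iota> cncl prms tr gs"
    and SP: "S_proof \<alpha> (Kmax \<iota>) \<iota> cncl prms tr gs P"
begin

lemma preP: "is_preproof (S_seq \<alpha> (Kmax \<iota>) \<iota>) (S_ok \<alpha> (Kmax \<iota>) \<iota> cncl prms tr gs) P"
  using SP unfolding S_proof_def by blast

lemma afP: "assumption_free P"
  using SP unfolding S_proof_def by blast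

lemma finP: "finite (nodes P)" and rootP: "[] \<in> nodes P"
  and pclP: "t \<in> nodes P \<Longrightarrow> prefix s t \<Longrightarrow> s \<in> nodes P"
  using preP unfolding is_preproof_def by blast+

lemma sparseP: "t \<in> nodes P \<Longrightarrow> sparse \<alpha> (Kmax \<iota>) (\<iota> (fst (lbl P t))) (snd (lbl P t))"
  using preP unfolding is_preproof_def S_seq_def by blast

lemma boardP: "t \<in> nodes P \<Longrightarrow> board_on (\<iota> (fst (lbl P t))) (snd (lbl P t))"
  using sparseP unfolding sparse_def by blast

lemma leafP: "t \<in> nodes P \<Longrightarrow> rul P t = None \<Longrightarrow> t @ [j] \<notin> nodes P"
  using preP unfolding is_preproof_def by fastforce

lemma leaf_bud: "t \<in> nodes P \<Longrightarrow> rul P t = None \<Longrightarrow> bud P t \<noteq> None"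
  using afP unfolding assumption_free_def by blast

lemma budP: "bud P t = Some c \<Longrightarrow> t \<in> nodes P \<and> rul P t = None \<and> strict_prefix c t
              \<and> (\<exists>j. c @ [j] \<in> nodes P) \<and> lbl P c = lbl P t"
  using preP unfolding is_preproof_def by blast

lemma ruleP:
  assumes "t \<in> nodes P" "rul P t = Some (R, B)"
  shows "lbl P t = (cncl R, B) \<and> sparse \<alpha> (Kmax \<iota>) (\<iota> (cncl R)) B
    \<and> (\<forall>j. t @ [j] \<in> nodes P \<longleftrightarrow> j < length (prms R))
    \<and> (\<forall>i < length (prms R). lbl P (t @ [i]) = (prms R ! i,
          thin_board (gs (\<iota> (cncl R)) (\<iota> (prms R ! i)) (tr R i) B)))"
proof -
  have "\<forall>t\<in>nodes P. case rul P t of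
          None \<Rightarrow> (\<forall>j. t @ [j] \<notin> nodes P)
        | Some k \<Rightarrow> (\<exists>n. (\<forall>j. t @ [j] \<in> nodes P \<longleftrightarrow> j < n)
                        \<and> S_ok \<alpha> (Kmax \<iota>) \<iota> cncl prms tr gs (lbl P t) k (map (\<lambda>j. lbl P (t @ [j])) [0..<n]))"
    using preP unfolding is_preproof_def by (elim conjE) assumption
  from this assms(1) have "case rul P t of
          None \<Rightarrow> (\<forall>j. t @ [j] \<notin> nodes P)
        | Some k \<Rightarrow> (\<exists>n. (\<forall>j. t @ [j] \<in> nodes P \<longleftrightarrow> j < n)
                        \<and> S_ok \<alpha> (Kmax \<iota>) \<iota> cncl prms tr gs (lbl P t) k (map (\<lambda>j. lbl P (t @ [j])) [0..<n]))"
    by (rule bspec)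
  then have "\<exists>n. (\<forall>j. t @ [j] \<in> nodes P \<longleftrightarrow> j < n)
                        \<and> S_ok \<alpha> (Kmax \<iota>) \<iota> cncl prms tr gs (lbl P t) (R, B) (map (\<lambda>j. lbl P (t @ [j])) [0..<n])"
    using assms(2) by simp
  then obtain n where n: "\<forall>j. t @ [j] \<in> nodes P \<longleftrightarrow> j < n"
    "S_ok \<alpha> (Kmax \<iota>) \<iota> cncl prms tr gs (lbl P t) (R, B) (map (\<lambda>j. lbl P (t @ [j])) [0..<n])"
    by blast
  from n(2) have S: "fst (lbl P t) = cncl R \<and> snd (lbl P t) = B \<and> sparse \<alpha> (Kmax \<iota>) (\<iota> (fst (lbl P t))) B
    \<and> map (\<lambda>j. lbl P (t @ [j])) [0..<n] = map (\<lambda>i. (prms R ! i,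
                       thin_board (gs (\<iota> (cncl R)) (\<iota> (prms R ! i)) (tr R i) B))) [0..<length (prms R)]"
    unfolding S_ok_def fst_conv snd_conv .
  then have o12: "fst (lbl P t) = cncl R" "snd (lbl P t) = B" "sparse \<alpha> (Kmax \<iota>) (\<iota> (fst (lbl P t))) B"
    by blast+
  then have o: "fst (lbl P t) = cncl R" "snd (lbl P t) = B" "sparse \<alpha> (Kmax \<iota>) (\<iota> (cncl R)) B"
    by simp_all
  from S have m: "map (\<lambda>j. lbl P (t @ [j])) [0..<n] = map (\<lambda>i. (prms R ! i,
                       thin_board (gs (\<iota> (cncl R)) (\<iota> (prms R ! i)) (tr R i) B))) [0..<length (prms R)]"
    by blast
  from arg_cong[OF m, of length] have nl: "n = length (prms R)" by simp
  have "lbl P (t @ [i]) = (prms R ! i, thin_board (gs (\<iota> (cncl R)) (\<iota> (prms R ! i)) (tr R i) B))"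
    if "i < length (prms R)" for i
    using arg_cong[OF m, of "\<lambda>l. l ! i"] that nl by simp
  then show ?thesis using o n(1) nl by (simp add: prod_eq_iff)
qed

definition sfx :: "nat list \<Rightarrow> nat list set" where
  "sfx t = (case rul P t of None \<Rightarrow> {[]} | Some (R, B) \<Rightarrow>
     (\<lambda>j. replicate j 0) ` {..Suc (length (cov_list B))}
     \<union> (\<lambda>i. replicate (Suc (length (cov_list B))) 0 @ [i]) ` {..<length (prms R)})"

definition ent :: "nat list \<Rightarrow> nat list \<Rightarrow> ('s \<times> ('x,'a) board) \<times> 'r rkind option" where
  "ent t x = (case rul P t of None \<Rightarrow> (lbl P t, None) | Some (R, B) \<Rightarrow>
    if length x < length (cov_list B) then ((cncl R, reset_stage B (length x)), Some (RReset (rev (cov_list B) ! length x)))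
    else if length x = length (cov_list B) then ((cncl R, reset_stage B (length x)), Some RPop)
    else if length x = Suc (length (cov_list B)) then ((cncl R, greedy_pre (\<iota> (cncl R)) B), Some (RRule R))
    else ((prms R ! last x, gs (\<iota> (cncl R)) (\<iota> (prms R ! last x)) (tr R (last x)) B), Some RWeak))"

lemma sfx_rep: "rul P t = Some (R, B) \<Longrightarrow> j \<le> Suc (length (cov_list B)) \<Longrightarrow> replicate j 0 \<in> sfx t"
  unfolding sfx_def by simp

lemma sfx_weak: "rul P t = Some (R, B) \<Longrightarrow> i < length (prms R)
   \<Longrightarrow> replicate (Suc (length (cov_list B))) 0 @ [i] \<in> sfx t"
proof -
  assume a: "rul P t = Some (R, B)" "i < length (prms R)"
  have "sfx t = (\<lambda>j. replicate j 0) ` {..Suc (length (cov_list B))}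
     \<union> (\<lambda>i. replicate (Suc (length (cov_list B))) 0 @ [i]) ` {..<length (prms R)}"
    unfolding sfx_def using a(1) by simp
  moreover have "replicate (Suc (length (cov_list B))) 0 @ [i] \<in> (\<lambda>i. replicate (Suc (length (cov_list B))) 0 @ [i]) ` {..<length (prms R)}"
    using a(2) by (intro imageI) simp
  ultimately show ?thesis by blast
qed

lemma sfx_None: "rul P t = None \<Longrightarrow> sfx t = {[]}"
  unfolding sfx_def by simp

lemma sfx_Some: "rul P t = Some (R, B) \<Longrightarrow> x \<in> sfx t \<Longrightarrow>
   (\<exists>j\<le>Suc (length (cov_list B)). x = replicate j 0) \<or> (\<exists>i<length (prms R). x = replicate (Suc (length (cov_list B))) 0 @ [i])"
  unfolding sfx_def by auto

abbreviation "EE \<equiv> exp_entries \<iota> cncl prms tr gs P"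
abbreviation "QQ \<equiv> expand \<iota> cncl prms tr gs P"

lemma E_char: "e \<in> EE \<longleftrightarrow> (\<exists>t x. t \<in> nodes P \<and> x \<in> sfx t \<and> e = (phi P t @ x, ent t x))"
proof
  assume "e \<in> EE"
  note ee = this[unfolded exp_entries_def]
  from ee show "\<exists>t x. t \<in> nodes P \<and> x \<in> sfx t \<and> e = (phi P t @ x, ent t x)"
  proof (elim UnE)
    assume "e \<in> {(phi P t, lbl P t, None) | t. t \<in> nodes P \<and> rul P t = None}"
    then obtain t where "t \<in> nodes P" "rul P t = None" "e = (phi P t, lbl P t, None)" by blast
    then have "t \<in> nodes P" "([]) \<in> sfx t" "e = (phi P t @ ([]), ent t ([]))"
      by (simp_all add: sfx_rep sfx_weak sfx_None ent_def del: replicate_Suc)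
    then show ?thesis by blast
  next
    assume "e \<in> {(phi P t @ replicate j 0, (cncl R, reset_stage B j), Some (RReset (rev (cov_list B) ! j)))
       | t R B j. t \<in> nodes P \<and> rul P t = Some (R, B) \<and> j < length (cov_list B)}"
    then obtain t R B j where "t \<in> nodes P" "rul P t = Some (R, B)" "j < length (cov_list B)"
      "e = (phi P t @ replicate j 0, (cncl R, reset_stage B j), Some (RReset (rev (cov_list B) ! j)))" by blast
    then have "t \<in> nodes P" "(replicate j 0) \<in> sfx t" "e = (phi P t @ (replicate j 0), ent t (replicate j 0))"
      by (simp_all add: sfx_rep sfx_weak sfx_None ent_def del: replicate_Suc)
    then show ?thesis by blast
  next
    assume "e \<in> {(phi P t @ replicate (length (cov_list B)) 0,
        (cncl R, reset_stage B (length (cov_list B))), Some RPop)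
       | t R B. t \<in> nodes P \<and> rul P t = Some (R, B)}"
    then obtain t R B where "t \<in> nodes P" "rul P t = Some (R, B)"
      "e = (phi P t @ replicate (length (cov_list B)) 0, (cncl R, reset_stage B (length (cov_list B))), Some RPop)" by blast
    then have "t \<in> nodes P" "(replicate (length (cov_list B)) 0) \<in> sfx t" "e = (phi P t @ (replicate (length (cov_list B)) 0), ent t (replicate (length (cov_list B)) 0))"
      by (simp_all add: sfx_rep sfx_weak sfx_None ent_def del: replicate_Suc)
    then show ?thesis by blast
  next
    assume "e \<in> {(phi P t @ replicate (Suc (length (cov_list B))) 0,
        (cncl R, greedy_pre (\<iota> (cncl R)) B), Some (RRule R))
       | t R B. t \<in> nodes P \<and> rul P t = Some (R, B)}"
    then obtain t R B where "t \<in> nodes P" "rul P t = Some (R, B)"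
      "e = (phi P t @ replicate (Suc (length (cov_list B))) 0, (cncl R, greedy_pre (\<iota> (cncl R)) B), Some (RRule R))" by blast
    then have "t \<in> nodes P" "(replicate (Suc (length (cov_list B))) 0) \<in> sfx t" "e = (phi P t @ (replicate (Suc (length (cov_list B))) 0), ent t (replicate (Suc (length (cov_list B))) 0))"
      by (simp_all add: sfx_rep sfx_weak sfx_None ent_def del: replicate_Suc)
    then show ?thesis by blast
  next
    assume "e \<in> {(phi P t @ replicate (Suc (length (cov_list B))) 0 @ [i],
        (prms R ! i, gs (\<iota> (cncl R)) (\<iota> (prms R ! i)) (tr R i) B), Some RWeak)
       | t R B i. t \<in> nodes P \<and> rul P t = Some (R, B) \<and> i < length (prms R)}"
    then obtain t R B i where "t \<in> nodes P" "rul P t = Some (R, B)" "i < length (prms R)"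
      "e = (phi P t @ replicate (Suc (length (cov_list B))) 0 @ [i],
        (prms R ! i, gs (\<iota> (cncl R)) (\<iota> (prms R ! i)) (tr R i) B), Some RWeak)" by blast
    then have "t \<in> nodes P" "(replicate (Suc (length (cov_list B))) 0 @ [i]) \<in> sfx t" "e = (phi P t @ (replicate (Suc (length (cov_list B))) 0 @ [i]), ent t (replicate (Suc (length (cov_list B))) 0 @ [i]))"
      by (simp_all add: sfx_rep sfx_weak sfx_None ent_def del: replicate_Suc)
    then show ?thesis by blast
  qed
next
  assume "\<exists>t x. t \<in> nodes P \<and> x \<in> sfx t \<and> e = (phi P t @ x, ent t x)"
  then obtain t x where tx: "t \<in> nodes P" "x \<in> sfx t" "e = (phi P t @ x, ent t x)" by blast
  show "e \<in> EE"
  proof (cases "rul P t")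
    case None
    then have "x = []" using tx(2) unfolding sfx_def by simp
    then have "e \<in> {(phi P t, lbl P t, None) | t. t \<in> nodes P \<and> rul P t = None}"
      using tx None by (auto simp: ent_def)
    then show ?thesis unfolding exp_entries_def by blast
  next
    case (Some k)
    obtain R B where k: "k = (R, B)" by (rule prod.exhaust)
    let ?k = "length (cov_list B)"
    from tx(2) Some k have "(\<exists>j\<le>Suc ?k. x = replicate j 0) \<or> (\<exists>i<length (prms R). x = replicate (Suc ?k) 0 @ [i])"
      using sfx_Some by simp
    then show ?thesis
    proof (elim disjE exE conjE)
      fix j assume j: "j \<le> Suc ?k" "x = replicate j 0"
      consider "j < ?k" | "j = ?k" | "j = Suc ?k" using j by linarith
      then show ?thesis
      proof cases
        case 1
        then have "e = (phi P t @ replicate j 0, (cncl R, reset_stage B j), Some (RReset (rev (cov_list B) ! j)))"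
          using tx Some k j by (simp add: ent_def)
        then show ?thesis unfolding exp_entries_def using tx(1) Some k 1 by blast
      next
        case 2
        then have "e = (phi P t @ replicate (length (cov_list B)) 0,
            (cncl R, reset_stage B (length (cov_list B))), Some RPop)"
          using tx Some k j by (simp add: ent_def)
        then show ?thesis unfolding exp_entries_def using tx(1) Some k by blast
      next
        case 3
        then have "e = (phi P t @ replicate (Suc (length (cov_list B))) 0,
            (cncl R, greedy_pre (\<iota> (cncl R)) B), Some (RRule R))"
          using tx Some k j by (simp add: ent_def)
        then show ?thesis unfolding exp_entries_def using tx(1) Some k by blast
      qed
    next
      fix i assume i: "i < length (prms R)" "x = replicate (Suc ?k) 0 @ [i]"
      then have "e = (phi P t @ replicate (Suc (length (cov_list B))) 0 @ [i],
          (prms R ! i, gs (\<iota> (cncl R)) (\<iota> (prms R ! i)) (tr R i) B), Some RWeak)"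
        using tx Some k by (simp add: ent_def)
      then show ?thesis unfolding exp_entries_def using tx(1) Some k i by blast
    qed
  qed
qed

lemma phi_eq: "phi P t = phi_aux (cov_count P) [] t"
  unfolding phi_def ..

lemma sfx_nil: "[] \<in> sfx t"
  unfolding sfx_def by (cases "rul P t") (auto intro: image_eqI[of _ _ 0])

lemma sfx_len: "x \<in> sfx t \<Longrightarrow> length x \<le> Suc (cov_count P t) + 1"
  unfolding sfx_def cov_count_def by (cases "rul P t") auto

lemma phi_sfx_inj: "x \<in> sfx t \<Longrightarrow> x' \<in> sfx t' \<Longrightarrow> phi P t @ x = phi P t' @ x' \<Longrightarrow> t = t' \<and> x = x'"
  using phi_aux_inj[of "cov_count P" "[]" t x t' x'] sfx_len[of x t] sfx_len[of x' t'] unfolding phi_eq by simp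

lemma phi_inj: "phi P t = phi P t' \<Longrightarrow> t = t'"
  using phi_sfx_inj[OF sfx_nil sfx_nil, of t t'] by simp

lemma ent_in_E: "t \<in> nodes P \<Longrightarrow> x \<in> sfx t \<Longrightarrow> (phi P t @ x, ent t x) \<in> EE"
  unfolding E_char by blast

lemma nodes_Q: "nodes QQ = fst ` EE"
  unfolding expand_def Let_def by simp

lemma nodes_Q_iff: "s \<in> nodes QQ \<longleftrightarrow> (\<exists>t x. t \<in> nodes P \<and> x \<in> sfx t \<and> s = phi P t @ x)"
proof
  assume "s \<in> nodes QQ"
  then obtain e where "e \<in> EE" "s = fst e" unfolding nodes_Q by blast
  then show "\<exists>t x. t \<in> nodes P \<and> x \<in> sfx t \<and> s = phi P t @ x" unfolding E_char by auto
next
  assume "\<exists>t x. t \<in> nodes P \<and> x \<in> sfx t \<and> s = phi P t @ x"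
  then obtain t x where "t \<in> nodes P" "x \<in> sfx t" "s = phi P t @ x" by blast
  then show "s \<in> nodes QQ" unfolding nodes_Q using ent_in_E by force
qed

lemma some_E: assumes "t \<in> nodes P" "x \<in> sfx t"
  shows "(SOME e. e \<in> EE \<and> fst e = phi P t @ x) = (phi P t @ x, ent t x)"
proof (rule some_equality)
  show "(phi P t @ x, ent t x) \<in> EE \<and> fst (phi P t @ x, ent t x) = phi P t @ x"
    using ent_in_E[OF assms] by simp
next
  fix e assume e: "e \<in> EE \<and> fst e = phi P t @ x"
  then obtain t' x' where "t' \<in> nodes P" "x' \<in> sfx t'" "e = (phi P t' @ x', ent t' x')"
    unfolding E_char by blast
  moreover then have "t' = t \<and> x' = x" using phi_sfx_inj[OF _ assms(2)] e by auto
  ultimately show "e = (phi P t @ x, ent t x)" by simp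
qed

lemma lbl_Q: "t \<in> nodes P \<Longrightarrow> x \<in> sfx t \<Longrightarrow> lbl QQ (phi P t @ x) = fst (ent t x)"
  unfolding expand_def Let_def by (simp add: some_E)

lemma rul_Q: "t \<in> nodes P \<Longrightarrow> x \<in> sfx t \<Longrightarrow> rul QQ (phi P t @ x) = snd (ent t x)"
  unfolding expand_def Let_def by (simp add: some_E)

lemma bud_Q: "bud QQ s = (if \<exists>t\<in>nodes P. phi P t = s \<and> bud P t \<noteq> None
                   then Some (phi P (the (bud P (SOME t. t \<in> nodes P \<and> phi P t = s \<and> bud P t \<noteq> None))))
                   else None)"
  unfolding expand_def Let_def by simp

lemma bud_Q_Some: "bud QQ s = Some c' \<Longrightarrow> \<exists>t c. t \<in> nodes P \<and> bud P t = Some c \<and> s = phi P t \<and> c' = phi P c"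
proof -
  assume a: "bud QQ s = Some c'"
  then have ex: "\<exists>t\<in>nodes P. phi P t = s \<and> bud P t \<noteq> None" unfolding bud_Q by (auto split: if_splits)
  then obtain t where t: "t \<in> nodes P" "phi P t = s" "bud P t \<noteq> None" by blast
  have "(SOME t. t \<in> nodes P \<and> phi P t = s \<and> bud P t \<noteq> None) = t"
    using t phi_inj by (intro some_equality) auto
  then have "c' = phi P (the (bud P t))" using a ex unfolding bud_Q by simp
  then show ?thesis using t by (intro exI[of _ t] exI[of _ "the (bud P t)"]) auto
qed

lemma bud_Q_phi: "t \<in> nodes P \<Longrightarrow> bud P t = Some c \<Longrightarrow> bud QQ (phi P t) = Some (phi P c)"
proof -
  assume t: "t \<in> nodes P" "bud P t = Some c"
  have "(SOME t'. t' \<in> nodes P \<and> phi P t' = phi P t \<and> bud P t' \<noteq> None) = t"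
    using t phi_inj by (intro some_equality) auto
  then show ?thesis unfolding bud_Q using t by auto
qed

lemma cc_Some: "rul P t = Some (R, B) \<Longrightarrow> cov_count P t = length (cov_list B)"
  unfolding cov_count_def by simp

lemma phi_snoc: "phi P (t @ [i]) = phi P t @ replicate (Suc (cov_count P t)) 0 @ [i, 0]"
  unfolding phi_eq phi_aux_snoc by simp

lemma child_Q:
  assumes "t \<in> nodes P" "x \<in> sfx t"
  shows "phi P t @ x @ [j] \<in> nodes QQ \<longleftrightarrow>
    (x @ [j] \<in> sfx t \<or> (\<exists>i. t @ [i] \<in> nodes P \<and> x @ [j] = replicate (Suc (cov_count P t)) 0 @ [i, 0]))"
proof
  assume "phi P t @ x @ [j] \<in> nodes QQ"
  then obtain t' x' where t': "t' \<in> nodes P" "x' \<in> sfx t'" "phi P t @ x @ [j] = phi P t' @ x'"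
    unfolding nodes_Q_iff by blast
  have "(t' = t \<and> x' = x @ [j]) \<or> (\<exists>i. t' = t @ [i] \<and> x' = [] \<and> x @ [j] = replicate (Suc (cov_count P ([] @ t))) 0 @ [i, 0])"
    using phi_aux_child[of "cov_count P" "[]" t' x' t x j] t'(3)[symmetric] sfx_len[OF assms(2)] sfx_len[OF t'(2)]
    unfolding phi_eq by simp
  then show "x @ [j] \<in> sfx t \<or> (\<exists>i. t @ [i] \<in> nodes P \<and> x @ [j] = replicate (Suc (cov_count P t)) 0 @ [i, 0])"
    using t' by auto
next
  assume "x @ [j] \<in> sfx t \<or> (\<exists>i. t @ [i] \<in> nodes P \<and> x @ [j] = replicate (Suc (cov_count P t)) 0 @ [i, 0])"
  then show "phi P t @ x @ [j] \<in> nodes QQ"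
  proof
    assume "x @ [j] \<in> sfx t"
    then show ?thesis unfolding nodes_Q_iff using assms by blast
  next
    assume "\<exists>i. t @ [i] \<in> nodes P \<and> x @ [j] = replicate (Suc (cov_count P t)) 0 @ [i, 0]"
    then obtain i where i: "t @ [i] \<in> nodes P" "x @ [j] = replicate (Suc (cov_count P t)) 0 @ [i, 0]" by blast
    then have "phi P t @ x @ [j] = phi P (t @ [i]) @ []" by (simp add: phi_snoc)
    then show ?thesis unfolding nodes_Q_iff using i(1) sfx_nil by blast
  qed
qed

lemma rep_snoc_eq_rep: "replicate a 0 @ [m] = replicate b (0::nat) \<Longrightarrow> m = 0"
proof -
  assume "replicate a 0 @ [m] = replicate b (0::nat)"
  then have "m \<in> set (replicate b (0::nat))" by (metis in_set_conv_decomp)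
  then show ?thesis by (simp split: if_splits)
qed

lemma children_reset:
  assumes "t \<in> nodes P" "rul P t = Some (R, B)" "j \<le> length (cov_list B)"
  shows "phi P t @ replicate j 0 @ [m] \<in> nodes QQ \<longleftrightarrow> m < 1"
proof -
  let ?k = "length (cov_list B)"
  have x: "replicate j 0 \<in> sfx t" using assms by (intro sfx_rep) auto
  have "replicate j 0 @ [m] \<in> sfx t \<longleftrightarrow> m = 0"
  proof
    assume "replicate j 0 @ [m] \<in> sfx t"
    from sfx_Some[OF assms(2) this] show "m = 0"
    proof (elim disjE exE conjE)
      fix j' assume "replicate j 0 @ [m] = replicate j' 0" then show "m = 0" by (rule rep_snoc_eq_rep)
    next
      fix i assume "i < length (prms R)" "replicate j 0 @ [m] = replicate (Suc ?k) 0 @ [i]"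
      then have "length (replicate j 0 @ [m]) = length (replicate (Suc ?k) 0 @ [i])" by simp
      then show "m = 0" using assms(3) by simp
    qed
  next
    assume "m = 0"
    then have "replicate j 0 @ [m] = replicate (Suc j) 0" by (simp add: replicate_append_same)
    then show "replicate j 0 @ [m] \<in> sfx t" using assms by (simp only:) (intro sfx_rep, auto)
  qed
  moreover have "\<not> (replicate j 0 @ [m] = replicate (Suc (cov_count P t)) 0 @ [i, 0])" for i
  proof
    assume "replicate j 0 @ [m] = replicate (Suc (cov_count P t)) 0 @ [i, 0]"
    then have "length (replicate j 0 @ [m]) = length (replicate (Suc (cov_count P t)) 0 @ [i, 0])" by simp
    then show False using assms cc_Some by simp
  qed
  ultimately show ?thesis using child_Q[OF assms(1) x] by auto
qed

lemma children_rule: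
  assumes "t \<in> nodes P" "rul P t = Some (R, B)"
  shows "phi P t @ replicate (Suc (length (cov_list B))) 0 @ [m] \<in> nodes QQ \<longleftrightarrow> m < length (prms R)"
proof -
  let ?k = "length (cov_list B)"
  have x: "replicate (Suc ?k) 0 \<in> sfx t" using assms by (intro sfx_rep) auto
  have "replicate (Suc ?k) 0 @ [m] \<in> sfx t \<longleftrightarrow> m < length (prms R)"
  proof
    assume "replicate (Suc ?k) 0 @ [m] \<in> sfx t"
    from sfx_Some[OF assms(2) this] show "m < length (prms R)"
    proof (elim disjE exE conjE)
      fix j' assume "j' \<le> Suc ?k" "replicate (Suc ?k) 0 @ [m] = replicate j' 0"
      then have "length (replicate (Suc ?k) 0 @ [m]) = length (replicate j' (0::nat))" by simp
      then show ?thesis using \<open>j' \<le> Suc ?k\<close> by simp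
    next
      fix i assume "i < length (prms R)" "replicate (Suc ?k) 0 @ [m] = replicate (Suc ?k) 0 @ [i]"
      then show ?thesis by simp
    qed
  next
    assume "m < length (prms R)"
    then show "replicate (Suc ?k) 0 @ [m] \<in> sfx t" using assms by (intro sfx_weak)
  qed
  moreover have "\<not> (replicate (Suc ?k) 0 @ [m] = replicate (Suc (cov_count P t)) 0 @ [i, 0])" for i
  proof
    assume "replicate (Suc ?k) 0 @ [m] = replicate (Suc (cov_count P t)) 0 @ [i, 0]"
    then have "length (replicate (Suc ?k) 0 @ [m]) = length (replicate (Suc (cov_count P t)) 0 @ [i, 0])" by simp
    then show False using assms cc_Some by simp
  qed
  ultimately show ?thesis using child_Q[OF assms(1) x] by (auto simp del: replicate_Suc)
qed

lemma children_weak: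
  assumes "t \<in> nodes P" "rul P t = Some (R, B)" "i < length (prms R)"
  shows "phi P t @ (replicate (Suc (length (cov_list B))) 0 @ [i]) @ [m] \<in> nodes QQ \<longleftrightarrow> m < 1"
proof -
  let ?k = "length (cov_list B)"
  have x: "replicate (Suc ?k) 0 @ [i] \<in> sfx t" using assms by (intro sfx_weak)
  have "(replicate (Suc ?k) 0 @ [i]) @ [m] \<notin> sfx t"
  proof
    assume "(replicate (Suc ?k) 0 @ [i]) @ [m] \<in> sfx t"
    from sfx_len[OF this] show False using cc_Some[OF assms(2)] by simp
  qed
  moreover have "(\<exists>i'. t @ [i'] \<in> nodes P \<and> (replicate (Suc ?k) 0 @ [i]) @ [m] = replicate (Suc (cov_count P t)) 0 @ [i', 0])
     \<longleftrightarrow> m = 0"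
    using ruleP[OF assms(1,2)] assms(3) cc_Some[OF assms(2)] by (auto simp del: replicate_Suc)
  ultimately show ?thesis using child_Q[OF assms(1) x] by auto
qed

lemma ent_leaf: "rul P t = None \<Longrightarrow> ent t x = (lbl P t, None)"
  unfolding ent_def by simp

lemma ent_reset: "rul P t = Some (R, B) \<Longrightarrow> j < length (cov_list B) \<Longrightarrow>
  ent t (replicate j 0) = ((cncl R, reset_stage B j), Some (RReset (rev (cov_list B) ! j)))"
  unfolding ent_def by simp

lemma ent_pop: "rul P t = Some (R, B) \<Longrightarrow>
  ent t (replicate (length (cov_list B)) 0) = ((cncl R, reset_stage B (length (cov_list B))), Some RPop)"
  unfolding ent_def by simp

lemma ent_stage: "rul P t = Some (R, B) \<Longrightarrow> j \<le> length (cov_list B) \<Longrightarrow>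
  fst (ent t (replicate j 0)) = (cncl R, reset_stage B j)"
  unfolding ent_def by auto

lemma ent_rule: "rul P t = Some (R, B) \<Longrightarrow>
  ent t (replicate (Suc (length (cov_list B))) 0) = ((cncl R, greedy_pre (\<iota> (cncl R)) B), Some (RRule R))"
  unfolding ent_def by (simp del: replicate_Suc)

lemma ent_weak: "rul P t = Some (R, B) \<Longrightarrow>
  ent t (replicate (Suc (length (cov_list B))) 0 @ [i]) =
    ((prms R ! i, gs (\<iota> (cncl R)) (\<iota> (prms R ! i)) (tr R i) B), Some RWeak)"
  unfolding ent_def by (simp del: replicate_Suc)

lemma lbl_phi: "t \<in> nodes P \<Longrightarrow> lbl QQ (phi P t) = lbl P t"
proof -
  assume t: "t \<in> nodes P"
  have "lbl QQ (phi P t @ []) = fst (ent t [])" using lbl_Q[OF t sfx_nil] .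
  moreover have "fst (ent t []) = lbl P t"
  proof (cases "rul P t")
    case None then show ?thesis by (simp add: ent_leaf)
  next
    case (Some k)
    obtain R B where k: "k = (R, B)" by (rule prod.exhaust)
    have "fst (ent t (replicate 0 0)) = (cncl R, reset_stage B 0)" using Some k by (intro ent_stage) auto
    then show ?thesis using ruleP[OF t] Some k by simp
  qed
  ultimately show ?thesis by simp
qed

lemma gok_at:
  assumes "i < length (prms R)" "sparse \<alpha> (Kmax \<iota>) (\<iota> (cncl R)) B"
  shows "successor \<alpha> (tr R i) (greedy_pre (\<iota> (cncl R)) B) (gs (\<iota> (cncl R)) (\<iota> (prms R ! i)) (tr R i) B)
   \<and> sparse \<alpha> (Kmax \<iota>) (\<iota> (prms R ! i)) (thin_board (gs (\<iota> (cncl R)) (\<iota> (prms R ! i)) (tr R i) B))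
   \<and> set (fst (thin_board (gs (\<iota> (cncl R)) (\<iota> (prms R ! i)) (tr R i) B))) \<inter> set (fst B)
      = \<Inter> ((\<lambda>C. set (fst C)) ` ({reset_stage B j | j. j \<le> length (cov_list B)}
          \<union> {greedy_pre (\<iota> (cncl R)) B, gs (\<iota> (cncl R)) (\<iota> (prms R ! i)) (tr R i) B,
             thin_board (gs (\<iota> (cncl R)) (\<iota> (prms R ! i)) (tr R i) B)}))"
proof -
  note g = gok[unfolded greedy_choice_ok_def Let_def, rule_format]
  show ?thesis using g[OF assms] .
qed

lemma board_greedy_pre: "board_on X B \<Longrightarrow> board_on X (greedy_pre X B)"
  unfolding greedy_pre_def Let_def
  by (rule board_on_pop[OF board_on_reset_stage]) auto

lemma board_gs:
  assumes "i < length (prms R)" "sparse \<alpha> (Kmax \<iota>) (\<iota> (cncl R)) B"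
  shows "board_on (\<iota> (prms R ! i)) (gs (\<iota> (cncl R)) (\<iota> (prms R ! i)) (tr R i) B)"
proof -
  have bo: "board_on (\<iota> (cncl R)) (greedy_pre (\<iota> (cncl R)) B)"
    using assms(2) unfolding sparse_def by (intro board_greedy_pre) blast
  have r: "\<forall>x c y. (x, c, y) \<in> tr R i \<longrightarrow> y \<in> \<iota> (prms R ! i)" using trsub assms(1) by blast
  show ?thesis using board_on_successor[OF bo _ r] gok_at[OF assms] fin abot by blast
qed

lemma finite_sfx: "finite (sfx t)"
  unfolding sfx_def by (cases "rul P t") auto

lemma finite_Q: "finite (nodes QQ)"
proof -
  have "nodes QQ \<subseteq> (\<Union>t\<in>nodes P. (\<lambda>x. phi P t @ x) ` sfx t)"
  proof
    fix s assume "s \<in> nodes QQ"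
    then obtain t x where "t \<in> nodes P" "x \<in> sfx t" "s = phi P t @ x" unfolding nodes_Q_iff by blast
    then show "s \<in> (\<Union>t\<in>nodes P. (\<lambda>x. phi P t @ x) ` sfx t)" by blast
  qed
  moreover have "finite (\<Union>t\<in>nodes P. (\<lambda>x. phi P t @ x) ` sfx t)"
    by (intro finite_UN_I finP finite_imageI finite_sfx)
  ultimately show ?thesis by (rule finite_subset)
qed

lemma root_Q: "[] \<in> nodes QQ"
proof -
  have "\<exists>t x. t \<in> nodes P \<and> x \<in> sfx t \<and> [] = phi P t @ x"
    by (rule exI[of _ "[]"], rule exI[of _ "[]"]) (simp add: rootP sfx_nil phi_eq)
  then show ?thesis unfolding nodes_Q_iff .
qed

lemma prefix_rep: "prefix us (replicate j (0::nat)) \<Longrightarrow> us = replicate (length us) 0 \<and> length us \<le> j"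
proof -
  assume a: "prefix us (replicate j (0::nat))"
  then have "prefix us (replicate j 0 @ [0])" by (rule prefix_prefix)
  from prefix_rep_snoc[OF this]
  have "(us = replicate (length us) 0 \<and> length us \<le> j) \<or> us = replicate j 0 @ [0]" .
  moreover have "us \<noteq> replicate j 0 @ [0]"
  proof
    assume "us = replicate j 0 @ [0]"
    then have "length us = Suc j" by simp
    then show False using prefix_length_le[OF a] by simp
  qed
  ultimately show ?thesis by blast
qed

lemma rul_child: "t @ [i] \<in> nodes P \<Longrightarrow> \<exists>R B. rul P t = Some (R, B) \<and> i < length (prms R)"
proof -
  assume a: "t @ [i] \<in> nodes P"
  have t: "t \<in> nodes P" using pclP[OF a prefixI[OF refl]] .
  then have "rul P t \<noteq> None" using leafP a by blast
  then obtain R B where "rul P t = Some (R, B)" by fastforce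
  then show ?thesis using ruleP[OF t] a by blast
qed

lemma sfx_prefix: "x \<in> sfx t \<Longrightarrow> prefix us x \<Longrightarrow> us \<in> sfx t"
proof (cases "rul P t")
  case None
  assume "x \<in> sfx t" "prefix us x"
  then show ?thesis using None sfx_None by simp
next
  case (Some k)
  assume x: "x \<in> sfx t" and p: "prefix us x"
  obtain R B where k: "k = (R, B)" by (rule prod.exhaust)
  have S: "rul P t = Some (R, B)" using Some k by simp
  from sfx_Some[OF S x] show ?thesis
  proof (elim disjE exE conjE)
    fix j assume j: "j \<le> Suc (length (cov_list B))" "x = replicate j 0"
    then have "us = replicate (length us) 0 \<and> length us \<le> j" using p prefix_rep by simp
    then show ?thesis using sfx_rep[OF S, of "length us"] j by simp
  next
    fix i assume i: "i < length (prms R)" "x = replicate (Suc (length (cov_list B))) 0 @ [i]"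
    from prefix_rep_snoc[OF p[unfolded i(2)]] show ?thesis
      using sfx_rep[OF S, of "length us"] sfx_weak[OF S i(1)] by auto
  qed
qed

lemma prefix_phi_Q: "t \<in> nodes P \<Longrightarrow> prefix s (phi P t) \<Longrightarrow> s \<in> nodes QQ"
proof -
  assume t: "t \<in> nodes P" and p: "prefix s (phi P t)"
  from phi_aux_prefix[OF p[unfolded phi_eq]] show ?thesis
  proof
    assume "s = phi_aux (cov_count P) [] t"
    then have "s = phi P t @ []" unfolding phi_eq by simp
    then show ?thesis unfolding nodes_Q_iff using t sfx_nil by blast
  next
    assume "\<exists>m<length t. \<exists>y. s = phi_aux (cov_count P) [] (take m t) @ y \<and>
            prefix y (replicate (Suc (cov_count P ([] @ take m t))) 0 @ [t ! m])"
    then obtain m y where m: "m < length t" "s = phi P (take m t) @ y"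
      "prefix y (replicate (Suc (cov_count P (take m t))) 0 @ [t ! m])" unfolding phi_eq by auto
    have "take (Suc m) t = take m t @ [t ! m]" using m(1) by (simp add: take_Suc_conv_app_nth)
    moreover have "take (Suc m) t \<in> nodes P" using pclP[OF t] by (simp add: take_is_prefix)
    ultimately have c: "take m t @ [t ! m] \<in> nodes P" by simp
    have u: "take m t \<in> nodes P" using pclP[OF c prefixI[OF refl]] .
    obtain R B where RB: "rul P (take m t) = Some (R, B)" "t ! m < length (prms R)" using rul_child[OF c] by blast
    have "y \<in> sfx (take m t)"
      using prefix_rep_snoc[OF m(3)] sfx_rep[OF RB(1), of "length y"] sfx_weak[OF RB] cc_Some[OF RB(1)] by auto
    then show ?thesis unfolding nodes_Q_iff using u m(2) by blast
  qed
qed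

lemma pcl_Q: "s \<in> nodes QQ \<Longrightarrow> prefix s' s \<Longrightarrow> s' \<in> nodes QQ"
proof -
  assume "s \<in> nodes QQ" "prefix s' s"
  then obtain t x where tx: "t \<in> nodes P" "x \<in> sfx t" "s = phi P t @ x" unfolding nodes_Q_iff by blast
  from \<open>prefix s' s\<close> tx(3) have "prefix s' (phi P t) \<or> (\<exists>us. s' = phi P t @ us \<and> prefix us x)"
    by (simp add: prefix_append)
  then show ?thesis
  proof
    assume "prefix s' (phi P t)" then show ?thesis using prefix_phi_Q tx by blast
  next
    assume "\<exists>us. s' = phi P t @ us \<and> prefix us x"
    then obtain us where "s' = phi P t @ us" "prefix us x" by blast
    then show ?thesis unfolding nodes_Q_iff using tx sfx_prefix by blast
  qed
qed

lemma sq_Q: "s \<in> nodes QQ \<Longrightarrow> R_seq \<iota> (lbl QQ s)"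
proof -
  assume "s \<in> nodes QQ"
  then obtain t x where tx: "t \<in> nodes P" "x \<in> sfx t" "s = phi P t @ x" unfolding nodes_Q_iff by blast
  have l: "lbl QQ s = fst (ent t x)" using lbl_Q[OF tx(1,2)] tx(3) by simp
  show ?thesis
  proof (cases "rul P t")
    case None
    then show ?thesis unfolding R_seq_def l using boardP[OF tx(1)] by (simp add: ent_leaf)
  next
    case (Some k)
    obtain R B where k: "k = (R, B)" by (rule prod.exhaust)
    have S: "rul P t = Some (R, B)" using Some k by simp
    have sp: "sparse \<alpha> (Kmax \<iota>) (\<iota> (cncl R)) B" using ruleP[OF tx(1) S] by blast
    then have bo: "board_on (\<iota> (cncl R)) B" unfolding sparse_def by blast
    from sfx_Some[OF S tx(2)] show ?thesis
    proof (elim disjE exE conjE)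
      fix j assume j: "j \<le> Suc (length (cov_list B))" "x = replicate j 0"
      show ?thesis
      proof (cases "j \<le> length (cov_list B)")
        case True
        then show ?thesis unfolding R_seq_def l j(2) ent_stage[OF S True]
          using board_on_reset_stage[OF bo] by simp
      next
        case False
        then have "j = Suc (length (cov_list B))" using j by simp
        then show ?thesis unfolding R_seq_def l j(2) using ent_rule[OF S] board_greedy_pre[OF bo] by simp
      qed
    next
      fix i assume i: "i < length (prms R)" "x = replicate (Suc (length (cov_list B))) 0 @ [i]"
      show ?thesis unfolding R_seq_def l i(2) ent_weak[OF S] using board_gs[OF i(1) sp] by simp
    qed
  qed
qed

lemma ok_Q: "s \<in> nodes QQ \<Longrightarrow> (case rul QQ s of
          None \<Rightarrow> (\<forall>j. s @ [j] \<notin> nodes QQ)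
        | Some k \<Rightarrow> (\<exists>n. (\<forall>j. s @ [j] \<in> nodes QQ \<longleftrightarrow> j < n)
                        \<and> R_ok \<alpha> \<iota> cncl prms tr (lbl QQ s) k (map (\<lambda>j. lbl QQ (s @ [j])) [0..<n])))"
proof -
  assume "s \<in> nodes QQ"
  then obtain t x where tx: "t \<in> nodes P" "x \<in> sfx t" "s = phi P t @ x" unfolding nodes_Q_iff by blast
  have l: "lbl QQ s = fst (ent t x)" using lbl_Q[OF tx(1,2)] tx(3) by simp
  have r: "rul QQ s = snd (ent t x)" using rul_Q[OF tx(1,2)] tx(3) by simp
  show ?thesis
  proof (cases "rul P t")
    case None
    then have x: "x = []" using tx(2) sfx_None by simp
    have rs: "rul QQ s = None" using r None by (simp add: ent_leaf)
    have "s @ [j] \<notin> nodes QQ" for j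
    proof
      assume "s @ [j] \<in> nodes QQ"
      then have "[] @ [j] \<in> sfx t \<or> (\<exists>i. t @ [i] \<in> nodes P \<and> [] @ [j] = replicate (Suc (cov_count P t)) 0 @ [i, 0])"
        using child_Q[OF tx(1) sfx_nil] tx(3) x by simp
      then show False using sfx_None[OF None] leafP[OF tx(1) None] by auto
    qed
    then show ?thesis using rs by simp
  next
    case (Some k)
    obtain R B where k: "k = (R, B)" by (rule prod.exhaust)
    have S: "rul P t = Some (R, B)" using Some k by simp
    have sp: "sparse \<alpha> (Kmax \<iota>) (\<iota> (cncl R)) B" using ruleP[OF tx(1) S] by blast
    then have bo: "board_on (\<iota> (cncl R)) B" unfolding sparse_def by blast
    let ?k = "length (cov_list B)"
    from sfx_Some[OF S tx(2)] show ?thesis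
    proof (elim disjE exE conjE)
      fix j assume j: "j \<le> Suc ?k" "x = replicate j 0"
      consider "j < ?k" | "j = ?k" | "j = Suc ?k" using j by linarith
      then show ?thesis
      proof cases
        case 1
        let ?\<gamma> = "rev (cov_list B) ! j"
        have rs: "rul QQ s = Some (RReset ?\<gamma>)" using r j ent_reset[OF S 1] by simp
        have ls: "lbl QQ s = (cncl R, reset_stage B j)" using l j ent_stage[OF S] 1 by simp
        have ch: "\<forall>m. s @ [m] \<in> nodes QQ \<longleftrightarrow> m < 1" using children_reset[OF tx(1) S] 1 tx(3) j by simp
        have "s @ [0] = phi P t @ replicate (Suc j) 0" using tx(3) j by (simp add: replicate_append_same)
        then have "lbl QQ (s @ [0]) = (cncl R, reset_stage B (Suc j))"
          using lbl_Q[OF tx(1) sfx_rep[OF S, of "Suc j"]] ent_stage[OF S, of "Suc j"] 1 by simp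
        then have ok: "R_ok \<alpha> \<iota> cncl prms tr (lbl QQ s) (RReset ?\<gamma>) (map (\<lambda>j. lbl QQ (s @ [j])) [0..<1])"
          unfolding R_ok_def ls using reset_stage_covered[OF bo 1] reset_stage_Suc[OF 1] by simp
        have "\<exists>n. (\<forall>j. s @ [j] \<in> nodes QQ \<longleftrightarrow> j < n) \<and> R_ok \<alpha> \<iota> cncl prms tr (lbl QQ s) (RReset ?\<gamma>) (map (\<lambda>j. lbl QQ (s @ [j])) [0..<n])"
          using ch ok by blast
        then show ?thesis unfolding rs by simp
      next
        case 2
        have rs: "rul QQ s = Some RPop" using r j ent_pop[OF S] 2 by simp
        have ls: "lbl QQ s = (cncl R, reset_stage B ?k)" using l j ent_stage[OF S] 2 by simp
        have ch: "\<forall>m. s @ [m] \<in> nodes QQ \<longleftrightarrow> m < 1" using children_reset[OF tx(1) S] 2 tx(3) j by simp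
        have "s @ [0] = phi P t @ replicate (Suc ?k) 0" using tx(3) j 2 by (simp add: replicate_append_same)
        then have "lbl QQ (s @ [0]) = (cncl R, greedy_pre (\<iota> (cncl R)) B)"
          using lbl_Q[OF tx(1) sfx_rep[OF S, of "Suc ?k"]] ent_rule[OF S] by simp
        then have l0: "map (\<lambda>j. lbl QQ (s @ [j])) [0..<1] = [(cncl R, greedy_pre (\<iota> (cncl R)) B)]" by simp
        let ?Pp = "{y \<in> \<iota> (cncl R). snd (reset_stage B ?k) y bot = {}}"
        have gp: "greedy_pre (\<iota> (cncl R)) B = pop_board ?Pp (reset_stage B ?k)"
          unfolding greedy_pre_def Let_def by simp
        have "\<exists>P'. P' \<subseteq> \<iota> (cncl R) \<and> [(cncl R, greedy_pre (\<iota> (cncl R)) B)] = [(cncl R, pop_board P' (reset_stage B ?k))]"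
          by (rule exI[of _ ?Pp]) (simp add: gp)
        then have ok: "R_ok \<alpha> \<iota> cncl prms tr (lbl QQ s) RPop (map (\<lambda>j. lbl QQ (s @ [j])) [0..<1])"
          unfolding R_ok_def ls l0 by simp
        have "\<exists>n. (\<forall>j. s @ [j] \<in> nodes QQ \<longleftrightarrow> j < n) \<and> R_ok \<alpha> \<iota> cncl prms tr (lbl QQ s) RPop (map (\<lambda>j. lbl QQ (s @ [j])) [0..<n])"
          using ch ok by blast
        then show ?thesis unfolding rs by simp
      next
        case 3
        have rs: "rul QQ s = Some (RRule R)" using r j ent_rule[OF S] 3 by simp
        have ls: "lbl QQ s = (cncl R, greedy_pre (\<iota> (cncl R)) B)" using l j ent_rule[OF S] 3 by simp
        have ch: "\<forall>m. s @ [m] \<in> nodes QQ \<longleftrightarrow> m < length (prms R)"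
          using children_rule[OF tx(1) S] 3 tx(3) j by simp
        have lc: "lbl QQ (s @ [m]) = (prms R ! m, gs (\<iota> (cncl R)) (\<iota> (prms R ! m)) (tr R m) B)"
          if "m < length (prms R)" for m
        proof -
          have "s @ [m] = phi P t @ (replicate (Suc ?k) 0 @ [m])" using tx(3) j 3 by simp
          then show ?thesis using lbl_Q[OF tx(1) sfx_weak[OF S that]] ent_weak[OF S] by simp
        qed
        have ok: "R_ok \<alpha> \<iota> cncl prms tr (lbl QQ s) (RRule R) (map (\<lambda>j. lbl QQ (s @ [j])) [0..<length (prms R)])"
          unfolding R_ok_def ls using lc gok_at[OF _ sp] by simp
        have "\<exists>n. (\<forall>j. s @ [j] \<in> nodes QQ \<longleftrightarrow> j < n) \<and> R_ok \<alpha> \<iota> cncl prms tr (lbl QQ s) (RRule R) (map (\<lambda>j. lbl QQ (s @ [j])) [0..<n])"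
          using ch ok by blast
        then show ?thesis unfolding rs by simp
      qed
    next
      fix i assume i: "i < length (prms R)" "x = replicate (Suc ?k) 0 @ [i]"
      have rs: "rul QQ s = Some RWeak" using r i ent_weak[OF S] by simp
      have ls: "lbl QQ s = (prms R ! i, gs (\<iota> (cncl R)) (\<iota> (prms R ! i)) (tr R i) B)"
        using l i ent_weak[OF S] by simp
      have ch: "\<forall>m. s @ [m] \<in> nodes QQ \<longleftrightarrow> m < 1"
        using children_weak[OF tx(1) S i(1)] tx(3) i by simp
      have ti: "t @ [i] \<in> nodes P" using ruleP[OF tx(1) S] i by blast
      have "s @ [0] = phi P (t @ [i])" using tx(3) i cc_Some[OF S] by (simp add: phi_snoc)
      then have "lbl QQ (s @ [0]) = (prms R ! i, thin_board (gs (\<iota> (cncl R)) (\<iota> (prms R ! i)) (tr R i) B))"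
        using lbl_phi[OF ti] ruleP[OF tx(1) S] i by simp
      then have ok: "R_ok \<alpha> \<iota> cncl prms tr (lbl QQ s) RWeak (map (\<lambda>j. lbl QQ (s @ [j])) [0..<1])"
        unfolding R_ok_def ls using weakening_thin by simp
      have "\<exists>n. (\<forall>j. s @ [j] \<in> nodes QQ \<longleftrightarrow> j < n) \<and> R_ok \<alpha> \<iota> cncl prms tr (lbl QQ s) RWeak (map (\<lambda>j. lbl QQ (s @ [j])) [0..<n])"
        using ch ok by blast
      then show ?thesis unfolding rs by simp
    qed
  qed
qed

lemma phi_append: "phi P (c @ w) = phi P c @ phi_aux (cov_count P) c w"
  unfolding phi_eq phi_aux_append by simp

lemma bud_ok_Q: "bud QQ s = Some c' \<Longrightarrow> s \<in> nodes QQ \<and> rul QQ s = None \<and> strict_prefix c' s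
              \<and> (\<exists>j. c' @ [j] \<in> nodes QQ) \<and> lbl QQ c' = lbl QQ s"
proof -
  assume "bud QQ s = Some c'"
  then obtain t c where tc: "t \<in> nodes P" "bud P t = Some c" "s = phi P t" "c' = phi P c"
    using bud_Q_Some by blast
  have B: "rul P t = None" "strict_prefix c t" "\<exists>j. c @ [j] \<in> nodes P" "lbl P c = lbl P t"
    using budP[OF tc(2)] by blast+
  have c: "c \<in> nodes P" using pclP[OF tc(1)] B(2) by (simp add: strict_prefix_def)
  have s1: "s \<in> nodes QQ" unfolding nodes_Q_iff using tc(1,3) sfx_nil by (metis append_Nil2)
  have s2: "rul QQ s = None" using rul_Q[OF tc(1) sfx_nil] tc(3) B(1) by (simp add: ent_leaf)
  obtain w where w: "t = c @ w" "w \<noteq> []" using B(2) by (metis prefixE strict_prefix_def append_Nil2)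
  have "phi P t = phi P c @ phi_aux (cov_count P) c w" using w(1) phi_append by simp
  moreover have "phi_aux (cov_count P) c w \<noteq> []" using w(2) by simp
  ultimately have s3: "strict_prefix c' s" using tc by (simp add: strict_prefix_def)
  obtain j where "c @ [j] \<in> nodes P" using B(3) by blast
  then obtain R B0 where RB: "rul P c = Some (R, B0)" using rul_child by blast
  have "replicate 1 0 \<in> sfx c" using sfx_rep[OF RB, of 1] by simp
  then have "[0] \<in> sfx c" by simp
  then have "phi P c @ [0] \<in> nodes QQ" unfolding nodes_Q_iff using c by blast
  then have s4: "\<exists>j. c' @ [j] \<in> nodes QQ" using tc by blast
  have s5: "lbl QQ c' = lbl QQ s" using lbl_phi[OF c] lbl_phi[OF tc(1)] B(4) tc by simp
  show ?thesis using s1 s2 s3 s4 s5 by blast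
qed

lemma ent_Some_rul: "rul P t = Some k \<Longrightarrow> snd (ent t x) \<noteq> None"
  by (cases k) (simp add: ent_def)

lemma af_Q: "assumption_free QQ"
  unfolding assumption_free_def
proof (intro ballI impI)
  fix s assume s: "s \<in> nodes QQ" "rul QQ s = None"
  then obtain t x where tx: "t \<in> nodes P" "x \<in> sfx t" "s = phi P t @ x" unfolding nodes_Q_iff by blast
  have "snd (ent t x) = None" using rul_Q[OF tx(1,2)] tx(3) s(2) by simp
  have N: "rul P t = None"
  proof (rule ccontr)
    assume "rul P t \<noteq> None"
    then obtain k where "rul P t = Some k" by blast
    then show False using ent_Some_rul \<open>snd (ent t x) = None\<close> by blast
  qed
  then have "x = []" using tx(2) sfx_None by simp
  obtain c where "bud P t = Some c" using leaf_bud[OF tx(1) N] by blast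
  then show "bud QQ s \<noteq> None" using bud_Q_phi[OF tx(1)] tx(3) \<open>x = []\<close> by simp
qed

lemma preQ: "is_preproof (R_seq \<iota>) (R_ok \<alpha> \<iota> cncl prms tr) QQ"
  unfolding is_preproof_def
  using finite_Q root_Q pcl_Q sq_Q ok_Q bud_ok_Q by blast

lemma fst_greedy_pre: "fst (greedy_pre X B) = fst (reset_stage B (length (cov_list B)))"
  unfolding greedy_pre_def Let_def by simp

lemma trans_facts:
  assumes t: "t \<in> nodes P" and S: "rul P t = Some (R, B)" and i: "i < length (prms R)"
  defines "X \<equiv> \<iota> (cncl R)" and "Y \<equiv> \<iota> (prms R ! i)"
  shows "estep (fst B) (fst (snd (lbl P (t @ [i]))))
    \<and> (\<forall>\<theta>. prefix \<theta> (fst B) \<and> set \<theta> \<subseteq> set (fst (snd (lbl P (t @ [i])))) \<longrightarrow>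
          (\<forall>j \<le> length (cov_list B). prefix \<theta> (fst (reset_stage B j)))
          \<and> prefix \<theta> (fst (greedy_pre X B)) \<and> prefix \<theta> (fst (gs X Y (tr R i) B)))"
proof -
  let ?k = "length (cov_list B)"
  let ?Bs = "gs X Y (tr R i) B"
  let ?B' = "thin_board ?Bs"
  have sp: "sparse \<alpha> (Kmax \<iota>) X B" using ruleP[OF t S] unfolding X_def by blast
  have lb: "fst (snd (lbl P (t @ [i]))) = fst ?B'" using ruleP[OF t S] i unfolding X_def Y_def by simp
  have G: "successor \<alpha> (tr R i) (greedy_pre X B) ?Bs"
    "set (fst ?B') \<inter> set (fst B) = \<Inter> ((\<lambda>C. set (fst C)) ` ({reset_stage B j | j. j \<le> ?k} \<union> {greedy_pre X B, ?Bs, ?B'}))"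
    using gok_at[OF i sp[unfolded X_def]] unfolding X_def Y_def by blast+
  define C where "C = (\<lambda>j. if j \<le> ?k then fst (reset_stage B j) else if j = Suc ?k then fst ?Bs else fst ?B')"
  have C0: "C 0 = fst B" unfolding C_def by simp
  have Cn: "C (Suc (Suc ?k)) = fst ?B'" unfolding C_def by simp
  have steps: "\<forall>j<Suc (Suc ?k). estep (C j) (C (Suc j))"
  proof (intro allI impI)
    fix j assume j: "j < Suc (Suc ?k)"
    consider "j < ?k" | "j = ?k" | "j = Suc ?k" using j by linarith
    then show "estep (C j) (C (Suc j))"
    proof cases
      case 1 then show ?thesis unfolding C_def using reset_stage_Suc[OF 1] estep_reset by simp
    next
      case 2 then show ?thesis unfolding C_def using estep_successor[OF G(1)] by (simp add: fst_greedy_pre)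
    next
      case 3 then show ?thesis unfolding C_def using estep_thin by simp
    qed
  qed
  have pers: "set (fst ?B') \<inter> set (fst B) \<subseteq> set (C j)" if "j \<le> Suc (Suc ?k)" for j
  proof -
    have "C j \<in> (\<lambda>C. fst C) ` ({reset_stage B j | j. j \<le> ?k} \<union> {greedy_pre X B, ?Bs, ?B'})"
      unfolding C_def using that by auto
    then show ?thesis using G(2) by auto
  qed
  have a: "estep (fst B) (fst (snd (lbl P (t @ [i]))))"
    using estep_compose[of "Suc (Suc ?k)" C] steps pers unfolding C0 Cn lb by blast
  have b: "(\<forall>j \<le> ?k. prefix \<theta> (fst (reset_stage B j)))
          \<and> prefix \<theta> (fst (greedy_pre X B)) \<and> prefix \<theta> (fst ?Bs)"
    if th: "prefix \<theta> (fst B)" "set \<theta> \<subseteq> set (fst (snd (lbl P (t @ [i]))))" for \<theta>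
  proof -
    have sub: "set \<theta> \<subseteq> set (C j)" if "j \<le> Suc (Suc ?k)" for j
    proof -
      have "set \<theta> \<subseteq> set (fst B)" using th(1) by (metis prefixE set_append Un_upper1)
      then show ?thesis using th(2) pers[OF that] unfolding lb by blast
    qed
    have pj: "prefix \<theta> (C j)" if "j \<le> Suc (Suc ?k)" for j
      using that
    proof (induction j)
      case 0 then show ?case using th(1) C0 by simp
    next
      case (Suc j)
      then have "prefix \<theta> (C j)" "estep (C j) (C (Suc j))" using steps by simp_all
      then show ?case using estep_prefix sub[OF Suc.prems] by blast
    qed
    have "prefix \<theta> (fst (reset_stage B j))" if "j \<le> ?k" for j
      using pj[of j] that unfolding C_def by simp
    moreover have "prefix \<theta> (fst (greedy_pre X B))" using pj[of ?k] unfolding C_def fst_greedy_pre by simp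
    moreover have "prefix \<theta> (fst ?Bs)" using pj[of "Suc ?k"] unfolding C_def by simp
    ultimately show ?thesis by blast
  qed
  show ?thesis using a b by blast
qed

lemma loop_gamma:
  assumes bt: "bud P t = Some c" and tw: "t = c @ w" and wne: "w \<noteq> []"
  shows "\<exists>\<gamma>. (\<forall>m \<le> length w. \<gamma> \<in> set (fst (snd (lbl P (c @ take m w)))))
             \<and> (\<exists>m < length w. covered (snd (lbl P (c @ take m w))) \<gamma>)"
proof -
  let ?lc = "length c" let ?L = "length w"
  have Bt: "t \<in> nodes P" "lbl P c = lbl P t" using budP[OF bt] by blast+
  define idx where "idx i = (if i < ?lc then i else ?lc + (i - ?lc) mod (Suc ?L))" for i
  define p where "p i = take (idx i) t" for i
  have idx_le: "idx i \<le> ?lc + ?L" for i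
    unfolding idx_def using mod_less_divisor[of "Suc ?L"] by (simp add: less_Suc_eq_le)
  have idx_Suc: "idx (Suc i) = (if idx i = ?lc + ?L then ?lc else Suc (idx i))" for i
  proof (cases "Suc i < ?lc")
    case True then show ?thesis unfolding idx_def by simp
  next
    case F: False
    show ?thesis
    proof (cases "i < ?lc")
      case True
      then have "i = ?lc - 1" "Suc i = ?lc" using F by auto
      then show ?thesis unfolding idx_def using True by auto
    next
      case False
      then have e: "Suc i - ?lc = Suc (i - ?lc)" by simp
      show ?thesis unfolding idx_def using False F e
        by (simp add: mod_Suc)
    qed
  qed
  have lt: "length t = ?lc + ?L" using tw by simp
  have pn: "p i \<in> nodes P" for i unfolding p_def using pclP[OF Bt(1)] take_is_prefix by blast
  have ip: "inf_path P p" unfolding inf_path_def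
  proof
    show "p 0 = []" unfolding p_def idx_def by simp
    show "\<forall>i. p i \<in> nodes P \<and> ((\<exists>j. p (Suc i) = p i @ [j]) \<or> bud P (p i) = Some (p (Suc i)))"
    proof
    fix i
    show "p i \<in> nodes P \<and> ((\<exists>j. p (Suc i) = p i @ [j]) \<or> bud P (p i) = Some (p (Suc i)))"
    proof (cases "idx i = ?lc + ?L")
      case True
      then have "p i = t" "p (Suc i) = c" unfolding p_def using idx_Suc[of i] lt tw by simp_all
      then show ?thesis using pn[of i] bt by simp
    next
      case False
      then have lt2: "idx i < length t" using idx_le[of i] lt by simp
      have "p (Suc i) = p i @ [t ! idx i]" unfolding p_def using idx_Suc[of i] False lt2
        by (simp add: take_Suc_conv_app_nth)
      then show ?thesis using pn by blast
    qed
    qed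
  qed
  then obtain N \<gamma> where NG: "\<forall>i\<ge>N. \<gamma> \<in> set (fst (snd (lbl P (p i))))"
    "infinite {i. covered (snd (lbl P (p i))) \<gamma>}"
    using SP unfolding S_proof_def by blast
  have pidx: "p (?lc + Suc ?L * N + m) = c @ take m w" if "m \<le> ?L" for m
  proof -
    have e1: "(m + Suc ?L * N) mod Suc ?L = m mod Suc ?L" by (rule mod_mult_self2)
    have e2: "m mod Suc ?L = m" using that by (simp add: less_Suc_eq_le)
    have e3: "?lc + Suc ?L * N + m - ?lc = m + Suc ?L * N" by simp
    have "idx (?lc + Suc ?L * N + m) = ?lc + m"
      unfolding idx_def using e1 e2 e3 by (simp only: not_less le_add1 if_False add_le_imp_le_left) simp
    then show ?thesis unfolding p_def using tw by simp
  qed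
  have A: "\<forall>m \<le> ?L. \<gamma> \<in> set (fst (snd (lbl P (c @ take m w))))"
  proof (intro allI impI)
    fix m assume "m \<le> ?L"
    moreover have "?lc + Suc ?L * N + m \<ge> N" by simp
    ultimately show "\<gamma> \<in> set (fst (snd (lbl P (c @ take m w))))" using NG(1) pidx by metis
  qed
  have "\<exists>i \<ge> ?lc. covered (snd (lbl P (p i))) \<gamma>"
  proof (rule ccontr)
    assume "\<not> (\<exists>i \<ge> ?lc. covered (snd (lbl P (p i))) \<gamma>)"
    then have "{i. covered (snd (lbl P (p i))) \<gamma>} \<subseteq> {..<?lc}" by (auto simp: not_le)
    then show False using NG(2) finite_subset by blast
  qed
  then obtain i where i: "i \<ge> ?lc" "covered (snd (lbl P (p i))) \<gamma>" by blast
  define m where "m = (i - ?lc) mod (Suc ?L)"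
  have mL: "m \<le> ?L" unfolding m_def using mod_less_divisor[of "Suc ?L"] by (simp add: less_Suc_eq_le)
  have "p i = c @ take m w" unfolding p_def idx_def m_def using i(1) tw by simp
  then have cm: "covered (snd (lbl P (c @ take m w))) \<gamma>" using i(2) by simp
  have "\<exists>m < ?L. covered (snd (lbl P (c @ take m w))) \<gamma>"
  proof (cases "m = ?L")
    case True
    then have "c @ take m w = t" using tw by simp
    then have "covered (snd (lbl P (c @ take 0 w))) \<gamma>" using cm Bt(2) by simp
    then show ?thesis using wne by (intro exI[of _ 0]) simp
  next
    case False then show ?thesis using cm mL by (intro exI[of _ m]) simp
  qed
  then show ?thesis using A by blast
qed

lemma inv_Q:
  assumes "bud QQ s = Some c'"
  shows "\<exists>\<theta>. \<theta> \<noteq> [] \<and> (\<forall>s'. prefix c' s' \<and> prefix s' s \<longrightarrow> prefix \<theta> (fst (snd (lbl QQ s'))))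
               \<and> (\<exists>s'. prefix c' s' \<and> prefix s' s \<and> rul QQ s' = Some (RReset (last \<theta>)))"
proof -
  obtain t c where tc: "t \<in> nodes P" "bud P t = Some c" "s = phi P t" "c' = phi P c"
    using bud_Q_Some[OF assms] by blast
  have B: "rul P t = None" "strict_prefix c t" "lbl P c = lbl P t" using budP[OF tc(2)] by blast+
  obtain w where w: "t = c @ w" "w \<noteq> []" using B(2) by (metis prefixE strict_prefix_def append_Nil2)
  define u where "u m = c @ take m w" for m
  define \<Theta> where "\<Theta> m = fst (snd (lbl P (u m)))" for m
  let ?L = "length w"
  let ?cc = "cov_count P"
  have un: "u m \<in> nodes P" if "m \<le> ?L" for m
    using pclP[OF tc(1)] unfolding u_def w(1) by (simp add: take_is_prefix)
  have uS: "u (Suc m) = u m @ [w ! m]" if "m < ?L" for m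
    unfolding u_def using that by (simp add: take_Suc_conv_app_nth)
  have u0: "u 0 = c" and uL: "u ?L = t" unfolding u_def w(1) by simp_all
  have ru: "\<exists>R B. rul P (u m) = Some (R, B) \<and> w ! m < length (prms R)" if "m < ?L" for m
    using rul_child un[of "Suc m"] uS[OF that] that by simp
  have \<Theta>L: "\<Theta> ?L = \<Theta> 0" unfolding \<Theta>_def u0 uL using B(3) by simp
  have est: "estep (\<Theta> m) (\<Theta> (Suc m))" if mL: "m < ?L" for m
  proof -
    obtain R B0 where RB: "rul P (u m) = Some (R, B0)" "w ! m < length (prms R)" using ru[OF mL] by blast
    have um: "u m \<in> nodes P" using un mL by simp
    have "snd (lbl P (u m)) = B0" using ruleP[OF um RB(1)] by simp
    then show ?thesis unfolding \<Theta>_def uS[OF mL] using trans_facts[OF um RB] by simp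
  qed
  obtain \<gamma> where G: "\<forall>m \<le> ?L. \<gamma> \<in> set (\<Theta> m)" "\<exists>m < ?L. covered (snd (lbl P (u m))) \<gamma>"
    using loop_gamma[OF tc(2) w] unfolding \<Theta>_def u_def by blast
  have "board_on (\<iota> (fst (lbl P (u 0)))) (snd (lbl P (u 0)))" using boardP un[of 0] by simp
  then have d0: "distinct (\<Theta> 0)" unfolding \<Theta>_def board_on_def by blast
  have g0: "\<gamma> \<in> set (\<Theta> 0)" using G(1) by simp
  obtain u0 v0 where uv: "\<Theta> 0 = u0 @ \<gamma> # v0" using split_list[OF g0] by blast
  define \<theta> where "\<theta> = u0 @ [\<gamma>]"
  have allm: "set \<theta> \<subseteq> set (\<Theta> m)" if "m \<le> ?L" for m
  proof
    fix \<delta> assume "\<delta> \<in> set \<theta>"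
    then have "\<delta> \<in> set u0 \<or> \<delta> = \<gamma>" unfolding \<theta>_def by auto
    then show "\<delta> \<in> set (\<Theta> m)"
    proof
      assume "\<delta> \<in> set u0"
      have a1: "\<forall>j<?L. estep (\<Theta> j) (\<Theta> (Suc j))" using est by blast
      show ?thesis by (rule estep_cycle[of ?L \<Theta> \<gamma> u0 v0 \<delta> m, OF a1 \<Theta>L G(1) d0 uv \<open>\<delta> \<in> set u0\<close> that])
    qed (use G(1) that in blast)
  qed
  have pre: "prefix \<theta> (\<Theta> m)" if "m \<le> ?L" for m
    using that
  proof (induction m)
    case 0 then show ?case unfolding \<theta>_def uv by simp
  next
    case (Suc m)
    then have "prefix \<theta> (\<Theta> m)" "estep (\<Theta> m) (\<Theta> (Suc m))" using est by simp_all
    then show ?case using estep_prefix allm[OF Suc.prems] by blast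
  qed
  have Y: "phi P t = phi P c @ phi_aux ?cc c w" using w(1) phi_append by simp
  have part1: "prefix \<theta> (fst (snd (lbl QQ s')))" if s': "prefix c' s'" "prefix s' s" for s'
  proof -
    obtain y where y: "s' = phi P c @ y" using s'(1) tc(4) prefixE by metis
    have py: "prefix y (phi_aux ?cc c w)" using s'(2) unfolding y tc(3) Y by simp
    from phi_aux_prefix[OF py] show ?thesis
    proof
      assume "y = phi_aux ?cc c w"
      then have "s' = phi P t" using y Y by simp
      then show ?thesis using lbl_phi[OF tc(1)] pre[of ?L] unfolding \<Theta>_def uL by simp
    next
      assume "\<exists>m<length w. \<exists>z. y = phi_aux ?cc c (take m w) @ z \<and> prefix z (replicate (Suc (?cc (c @ take m w))) 0 @ [w ! m])"
      then obtain m z where mz: "m < ?L" "y = phi_aux ?cc c (take m w) @ z"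
        "prefix z (replicate (Suc (?cc (u m))) 0 @ [w ! m])" unfolding u_def by blast
      have s'u: "s' = phi P (u m) @ z" unfolding y mz(2) u_def phi_append by simp
      obtain R B0 where RB: "rul P (u m) = Some (R, B0)" "w ! m < length (prms R)" using ru[OF mz(1)] by blast
      have um: "u m \<in> nodes P" using un mz(1) by simp
      have lB: "snd (lbl P (u m)) = B0" using ruleP[OF um RB(1)] by simp
      have TF: "(\<forall>j \<le> length (cov_list B0). prefix \<theta> (fst (reset_stage B0 j)))
          \<and> prefix \<theta> (fst (greedy_pre (\<iota> (cncl R)) B0))
          \<and> prefix \<theta> (fst (gs (\<iota> (cncl R)) (\<iota> (prms R ! (w ! m))) (tr R (w ! m)) B0))"
      proof -
        have "prefix \<theta> (fst B0)" using pre[of m] mz(1) lB unfolding \<Theta>_def by simp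
        moreover have "set \<theta> \<subseteq> set (fst (snd (lbl P (u m @ [w ! m]))))"
          using allm[of "Suc m"] mz(1) uS[OF mz(1)] unfolding \<Theta>_def by simp
        ultimately show ?thesis using trans_facts[OF um RB] by blast
      qed
      have kc: "?cc (u m) = length (cov_list B0)" using cc_Some[OF RB(1)] .
      from prefix_rep_snoc[OF mz(3)[unfolded kc]]
      show ?thesis
      proof
        assume z: "z = replicate (length z) 0 \<and> length z \<le> Suc (length (cov_list B0))"
        have zs: "z \<in> sfx (u m)" using sfx_rep[OF RB(1), of "length z"] z by simp
        have l: "lbl QQ s' = fst (ent (u m) z)" using lbl_Q[OF um zs] s'u by simp
        show ?thesis
        proof (cases "length z \<le> length (cov_list B0)")
          case True
          have "fst (ent (u m) z) = (cncl R, reset_stage B0 (length z))"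
            using ent_stage[OF RB(1) True] z by simp
          then show ?thesis using l TF True by simp
        next
          case False
          then have "z = replicate (Suc (length (cov_list B0))) 0" using z by (metis le_antisym not_less_eq_eq)
          then show ?thesis using l TF ent_rule[OF RB(1)] by simp
        qed
      next
        assume z: "z = replicate (Suc (length (cov_list B0))) 0 @ [w ! m]"
        have zs: "z \<in> sfx (u m)" using sfx_weak[OF RB] z by simp
        have l: "lbl QQ s' = fst (ent (u m) z)" using lbl_Q[OF um zs] s'u by simp
        then show ?thesis using TF ent_weak[OF RB(1)] z by simp
      qed
    qed
  qed
  obtain m0 where m0: "m0 < ?L" "covered (snd (lbl P (u m0))) \<gamma>" using G(2) by blast
  obtain R B0 where RB: "rul P (u m0) = Some (R, B0)" "w ! m0 < length (prms R)" using ru[OF m0(1)] by blast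
  have um: "u m0 \<in> nodes P" using un m0(1) by simp
  have lB: "snd (lbl P (u m0)) = B0" using ruleP[OF um RB(1)] by simp
  have cov: "covered B0 \<gamma>" using m0(2) lB by simp
  then have "\<gamma> \<in> set (cov_list B0)" unfolding cov_list_def covered_def by simp
  then have "\<gamma> \<in> set (rev (cov_list B0))" by simp
  then obtain j where j: "j < length (cov_list B0)" "rev (cov_list B0) ! j = \<gamma>"
    by (metis in_set_conv_nth length_rev)
  define s0 where "s0 = phi P (u m0) @ replicate j 0"
  have zs: "replicate j 0 \<in> sfx (u m0)" using sfx_rep[OF RB(1), of j] j by simp
  have r0: "rul QQ s0 = Some (RReset \<gamma>)"
    using rul_Q[OF um zs] ent_reset[OF RB(1) j(1)] j(2) unfolding s0_def by simp
  have p1: "prefix c' s0" unfolding s0_def tc(4) u_def phi_append by simp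
  have "t = u m0 @ drop m0 w" unfolding u_def w(1) by simp
  then have "phi P t = phi P (u m0) @ phi_aux ?cc (u m0) (drop m0 w)" using phi_append by simp
  moreover have "drop m0 w = w ! m0 # drop (Suc m0) w" using m0(1) by (simp add: Cons_nth_drop_Suc)
  ultimately have "phi P t = phi P (u m0) @ replicate (Suc (length (cov_list B0))) 0 @ [w ! m0, 0]
        @ phi_aux ?cc (u m0 @ [w ! m0]) (drop (Suc m0) w)"
    using cc_Some[OF RB(1)] by simp
  moreover have "replicate (Suc (length (cov_list B0))) (0::nat) = replicate j 0 @ replicate (Suc (length (cov_list B0)) - j) 0"
    using j(1) by (simp add: replicate_add[symmetric])
  ultimately have "phi P t = (phi P (u m0) @ replicate j 0) @ (replicate (Suc (length (cov_list B0)) - j) 0 @ [w ! m0, 0]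
        @ phi_aux ?cc (u m0 @ [w ! m0]) (drop (Suc m0) w))"
    by (simp del: replicate_Suc)
  then have p2: "prefix s0 s" unfolding s0_def tc(3) by (rule prefixI)
  have "\<theta> \<noteq> []" "last \<theta> = \<gamma>" unfolding \<theta>_def by simp_all
  then show ?thesis using part1 p1 p2 r0 by metis
qed

lemma R_proof_Q: "R_proof \<alpha> \<iota> cncl prms tr QQ"
  unfolding R_proof_def using preQ af_Q inv_Q by blast

end


theorem mainTheorem10:
  fixes \<alpha> :: "'a::{finite,semilattice_sup,order_bot}"
    and \<iota> :: "'s::finite \<Rightarrow> 'x set"
    and cncl :: "'r::finite \<Rightarrow> 's"
    and prms :: "'r \<Rightarrow> 's list"
    and tr :: "'r \<Rightarrow> nat \<Rightarrow> ('x \<times> 'a \<times> 'x) set"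
    and gs :: "'x set \<Rightarrow> 'x set \<Rightarrow> ('x \<times> 'a \<times> 'x) set \<Rightarrow> ('x,'a) board \<Rightarrow> ('x,'a) board"
    and \<Pi> :: "('s \<times> ('x,'a) board, 'r \<times> ('x,'a) board) preproof"
  assumes "\<alpha> \<noteq> bot"
    and "\<forall>\<Gamma>. finite (\<iota> \<Gamma>)"
    and "\<forall>R i. i < length (prms R) \<longrightarrow> tr R i \<subseteq> \<iota> (cncl R) \<times> UNIV \<times> \<iota> (prms R ! i)"
    and "greedy_choice_ok \<alpha> (Kmax \<iota>) \<iota> cncl prms tr gs"
    and "S_proof \<alpha> (Kmax \<iota>) \<iota> cncl prms tr gs \<Pi>"
  shows "R_proof \<alpha> \<iota> cncl prms tr (expand \<iota> cncl prms tr gs \<Pi>)"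
proof -
  interpret ctx \<alpha> \<iota> cncl prms tr gs \<Pi>
    using assms by unfold_locales
  show ?thesis by (rule R_proof_Q)
qed

end
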